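(* Let $X\in\mathbb{R}^{m\times n}$ and $\lambda>0$, and let $X=U\Sigma V^T$ be the SVD of $X$ with singular values $\sigma_1\ge\sigma_2\ge\cdots\ge 0$. Let $r$ be an integer attaining $\min_k \big(k+\lambda\sum_{i>k}\sigma_i^2\big)$, and let $U_1,\Sigma_1,V_1$ consist of the top $r$ left singular vectors, singular values and right singular vectors of $X$. Then an optimal solution of $$\min_{A\in\mathbb{R}^{m\times n},\,Z\in\mathbb{R}^{n\times n},\,E\in\mathbb{R}^{m\times n}} \|Z\|_*+\lambda\|E\|_F^2\quad\text{s.t.}\quad A=AZ,\ X=A+E$$ is given by $A^*=U_1\Sigma_1V_1^T$, $Z^*=V_1V_1^T$, $E^*=X-A^*$.
   Context: $\|\cdot\|_*$ denotes the nuclear norm and $\|\cdot\|_F$ the Frobenius norm. *)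

theory Defs
  imports Jordan_Normal_Form.Matrix
begin

definition is_svd :: "real mat \<Rightarrow> real mat \<Rightarrow> real mat \<Rightarrow> real mat \<Rightarrow> bool" where
  "is_svd X U S V \<longleftrightarrow>
    (let m = dim_row X; n = dim_col X in
      U \<in> carrier_mat m m \<and> V \<in> carrier_mat n n \<and> S \<in> carrier_mat m n \<and>
      transpose_mat U * U = 1\<^sub>m m \<and> transpose_mat V * V = 1\<^sub>m n \<and>
      (\<forall>i<m. \<forall>j<n. i \<noteq> j \<longrightarrow> S $$ (i, j) = 0) \<and>
      (\<forall>i<min m n. 0 \<le> S $$ (i, i)) \<and>
      (\<forall>i j. i \<le> j \<and> j < min m n \<longrightarrow> S $$ (j, j) \<le> S $$ (i, i)) \<and>
      X = U * S * transpose_mat V)"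

definition nuclear_norm :: "real mat \<Rightarrow> real" where
  "nuclear_norm M = (THE s. \<exists>U S V. is_svd M U S V \<and>
      s = (\<Sum>i<min (dim_row M) (dim_col M). S $$ (i, i)))"

definition frob_norm :: "real mat \<Rightarrow> real" where
  "frob_norm M = sqrt (\<Sum>i<dim_row M. \<Sum>j<dim_col M. (M $$ (i, j))\<^sup>2)"

end

theory Submission
  imports Defs Jordan_Normal_Form.Schur_Decomposition
begin

lemma sym_real_root:
  fixes A :: "real mat"
  assumes A: "A \<in> carrier_mat n n" and sym: "transpose_mat A = A" and n: "n > 0"
  shows "\<exists>x. poly (char_poly A) x = 0"
proof -
  define Ac where "Ac = map_mat complex_of_real A"
  have Ac: "Ac \<in> carrier_mat n n" using A unfolding Ac_def by auto
  have cp: "char_poly Ac = map_poly complex_of_real (char_poly A)"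
    unfolding Ac_def by (rule of_real_hom.char_poly_hom[OF A])
  obtain as where as: "char_poly Ac = (\<Prod> a \<leftarrow> as. [:- a, 1:])" "length as = n"
    using char_poly_factorized[OF Ac] by blast
  define a where "a = hd as"
  have "a \<in> set as" using as(2) n unfolding a_def by (cases as) auto
  hence "poly (char_poly Ac) a = 0" unfolding as(1)
    by (induct as) (auto simp: poly_prod_list)
  hence "eigenvalue Ac a" using eigenvalue_root_char_poly[OF Ac] by simp
  then obtain v where v: "v \<in> carrier_vec n" "v \<noteq> 0\<^sub>v n" "Ac *\<^sub>v v = a \<cdot>\<^sub>v v"
    unfolding eigenvalue_def eigenvector_def using Ac by auto
  have Aij: "\<And>i j. i < n \<Longrightarrow> j < n \<Longrightarrow> A $$ (i,j) = A $$ (j,i)"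
    using sym A by (metis carrier_matD index_transpose_mat(1))
  define s where "s = (\<Sum>i<n. cnj (v$i) * (\<Sum>j<n. complex_of_real (A$$(i,j)) * v$j))"
  define N where "N = (\<Sum>i<n. cnj (v$i) * v$i)"
  have "\<And>i. i < n \<Longrightarrow> (\<Sum>j<n. complex_of_real (A$$(i,j)) * v$j) = a * v$i"
  proof -
    fix i assume i: "i < n"
    have "(Ac *\<^sub>v v) $ i = a * v $ i" using v(3) i v(1) by simp
    moreover have "(Ac *\<^sub>v v) $ i = (\<Sum>j<n. complex_of_real (A$$(i,j)) * v$j)"
      using i A v(1) unfolding Ac_def
      by (auto simp: mult_mat_vec_def scalar_prod_def lessThan_atLeast0 intro!: sum.cong)
    ultimately show "(\<Sum>j<n. complex_of_real (A$$(i,j)) * v$j) = a * v$i" by simp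
  qed
  hence s1: "s = a * N" unfolding s_def N_def by (simp add: sum_distrib_left algebra_simps)
  have "cnj s = (\<Sum>i<n. \<Sum>j<n. v$i * complex_of_real (A$$(i,j)) * cnj (v$j))"
    unfolding s_def by (simp add: sum_distrib_left algebra_simps)
  also have "\<dots> = (\<Sum>j<n. \<Sum>i<n. v$i * complex_of_real (A$$(i,j)) * cnj (v$j))"
    by (rule sum.swap)
  also have "\<dots> = s"
    unfolding s_def by (auto simp: sum_distrib_left algebra_simps Aij intro!: sum.cong)
  finally have s2: "cnj s = s" .
  have Nreal: "cnj N = N" unfolding N_def by (simp add: mult.commute)
  have "N \<noteq> 0"
  proof
    assume N0: "N = 0"
    have "Re N = (\<Sum>i<n. (Re (v$i))^2 + (Im (v$i))^2)" unfolding N_def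
      by (simp add: power2_eq_square sum.distrib)
    hence "(\<Sum>i<n. (Re (v$i))^2 + (Im (v$i))^2) = 0" using N0 by simp
    hence "\<forall>i\<in>{..<n}. (Re (v$i))^2 + (Im (v$i))^2 = 0" by (subst (asm) sum_nonneg_eq_0_iff) auto
    hence "v = 0\<^sub>v n" using v(1) by (intro eq_vecI) (auto simp: complex_eq_iff)
    thus False using v(2) by simp
  qed
  from s1 s2 Nreal have "cnj a * N = a * N" by (metis complex_cnj_mult)
  with \<open>N \<noteq> 0\<close> have "cnj a = a" by simp
  hence aR: "a = complex_of_real (Re a)" by (metis Reals_cnj_iff complex_is_Real_iff of_real_Re)
  have "poly (map_poly complex_of_real (char_poly A)) (complex_of_real (Re a)) = 0"
    using \<open>poly (char_poly Ac) a = 0\<close> cp aR by simp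
  hence "poly (char_poly A) (Re a) = 0" by simp
  thus ?thesis by blast
qed

lemma sprod_self_nonneg_real: "(v :: real vec) \<bullet> v \<ge> 0"
  using conjugate_square_ge_0_vec[of v] by simp

lemma unit_completion:
  fixes u :: "real vec"
  assumes u: "u \<in> carrier_vec n" and u1: "u \<bullet> u = 1"
  shows "\<exists>W. W \<in> carrier_mat n n \<and> transpose_mat W * W = 1\<^sub>m n \<and> col W 0 = u"
proof -
  have n: "n > 0" using u u1 by (cases n) (auto simp: scalar_prod_def)
  have u0: "u \<noteq> 0\<^sub>v n" using u1 by auto
  interpret cof_vec_space n "TYPE(real)" .
  define b where "b = basis_completion u"
  note bc = basis_completion[OF u u0, folded b_def]
  define ws where "ws = gram_schmidt n b"
  note gs = gram_schmidt_result[OF bc(2) bc(4) bc(5) ws_def]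
  have lenws: "length ws = n" using gs(4) bc(6) by simp
  from bc(7) bc(6) n obtain vs where bv: "b = u # vs" by (cases b) auto
  have hdws: "hd ws = u" unfolding ws_def bv using gram_schmidt_hd[OF u] by simp
  define ws' where "ws' = map (\<lambda>w. (1 / sqrt (w \<bullet> w)) \<cdot>\<^sub>v w) ws"
  have wsc: "\<And>i. i < n \<Longrightarrow> ws ! i \<in> carrier_vec n" using gs(3) lenws by auto
  have orth: "\<And>i j. i < n \<Longrightarrow> j < n \<Longrightarrow> (ws!i \<bullet> ws!j = 0) = (i \<noteq> j)"
    using corthogonalD[OF gs(2)] lenws by simp
  have pos: "\<And>i. i < n \<Longrightarrow> ws!i \<bullet> ws!i > 0"
    using orth sprod_self_nonneg_real by (metis less_eq_real_def)
  define W where "W = mat_of_cols n ws'"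
  have W: "W \<in> carrier_mat n n" unfolding W_def using mat_of_cols_carrier(1)[of n ws'] lenws by (simp add: ws'_def)
  have colW: "\<And>i. i < n \<Longrightarrow> col W i = (1 / sqrt (ws!i \<bullet> ws!i)) \<cdot>\<^sub>v ws!i"
    unfolding W_def ws'_def using lenws wsc by (simp add: col_mat_of_cols)
  have "transpose_mat W * W = 1\<^sub>m n"
  proof (rule eq_matI)
    fix i j assume i: "i < dim_row (1\<^sub>m n)" and j: "j < dim_col (1\<^sub>m n)"
    hence i: "i < n" and j: "j < n" by auto
    have "(transpose_mat W * W) $$ (i,j) = col W i \<bullet> col W j"
      using W i j by simp
    also have "\<dots> = (1 / sqrt (ws!i \<bullet> ws!i)) * (1 / sqrt (ws!j \<bullet> ws!j)) * (ws!i \<bullet> ws!j)"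
      unfolding colW[OF i] colW[OF j]
      using wsc[OF i] wsc[OF j] by (simp add: scalar_prod_smult_distrib smult_scalar_prod_distrib)
    also have "\<dots> = 1\<^sub>m n $$ (i,j)"
    proof (cases "i = j")
      case True
      have p: "ws!i \<bullet> ws!i > 0" using pos[OF i] .
      have "sqrt (ws!i \<bullet> ws!i) * sqrt (ws!i \<bullet> ws!i) = ws!i \<bullet> ws!i"
        using p by simp
      then show ?thesis using True i p by (simp add: field_simps)
    next
      case False then show ?thesis using orth[OF i j] i j by simp
    qed
    finally show "(transpose_mat W * W) $$ (i,j) = 1\<^sub>m n $$ (i,j)" .
  qed (use W in auto)
  moreover have "col W 0 = u"
  proof -
    have "ws ! 0 = u" using hdws lenws n by (cases ws) auto
    thus ?thesis using colW[OF n] u1 by simp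
  qed
  ultimately show ?thesis using W by blast
qed

definition diagm :: "nat \<Rightarrow> real mat \<Rightarrow> bool" where
  "diagm n D \<longleftrightarrow> (\<forall>i<n. \<forall>j<n. i \<noteq> j \<longrightarrow> D $$ (i,j) = 0)"
definition sortd :: "nat \<Rightarrow> real mat \<Rightarrow> bool" where
  "sortd n D \<longleftrightarrow> (\<forall>i j. i \<le> j \<and> j < n \<longrightarrow> D $$ (j,j) \<le> D $$ (i,i))"

lemma orth_right:
  fixes W :: "real mat"
  assumes W: "W \<in> carrier_mat n n" and o: "transpose_mat W * W = 1\<^sub>m n"
  shows "W * transpose_mat W = 1\<^sub>m n"
  using mat_mult_left_right_inverse[OF _ W o] W by auto

lemma conj_cancel:
  fixes A W :: "real mat"
  assumes W: "W \<in> carrier_mat n n" and A: "A \<in> carrier_mat n n" and WW: "W * transpose_mat W = 1\<^sub>m n"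
  shows "W * (transpose_mat W * A * W) * transpose_mat W = A"
proof -
  have WT: "transpose_mat W \<in> carrier_mat n n" using W by simp
  have "W * (transpose_mat W * A * W) * transpose_mat W = (W * transpose_mat W) * A * (W * transpose_mat W)"
    using W WT A by (simp add: assoc_mult_mat[of _ n n _ n _ n])
  thus ?thesis using WW A by simp
qed

lemma spectral:
  fixes A :: "real mat"
  assumes "A \<in> carrier_mat n n" "transpose_mat A = A"
  shows "\<exists>V D. V \<in> carrier_mat n n \<and> D \<in> carrier_mat n n \<and> transpose_mat V * V = 1\<^sub>m n \<and>
     diagm n D \<and> sortd n D \<and> (\<forall>i<n. poly (char_poly A) (D$$(i,i)) = 0) \<and>
     A = V * D * transpose_mat V"
  using assms
proof (induction n arbitrary: A)
  case 0
  show ?case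
    by (rule exI[of _ "1\<^sub>m 0"], rule exI[of _ "0\<^sub>m 0 0"], insert 0, auto simp: diagm_def sortd_def intro!: eq_matI)
next
  case (Suc n A)
  note A = Suc.prems(1) and sym = Suc.prems(2)
  define R where "R = {x. poly (char_poly A) x = 0}"
  have cpnz: "char_poly A \<noteq> 0" using degree_monic_char_poly[OF A] by auto
  have finR: "finite R" unfolding R_def using poly_roots_finite[OF cpnz] .
  have neR: "R \<noteq> {}" unfolding R_def using sym_real_root[OF A sym] by auto
  define e where "e = Max R"
  have eR: "e \<in> R" unfolding e_def using finR neR by simp
  have emax: "\<And>x. x \<in> R \<Longrightarrow> x \<le> e" unfolding e_def using finR by simp
  have "eigenvalue A e" using eR eigenvalue_root_char_poly[OF A] unfolding R_def by simp
  then obtain v where v: "v \<in> carrier_vec (Suc n)" "v \<noteq> 0\<^sub>v (Suc n)" "A *\<^sub>v v = e \<cdot>\<^sub>v v"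
    unfolding eigenvalue_def eigenvector_def using A by auto
  have vpos: "v \<bullet> v > 0" using conjugate_square_greater_0_vec[OF v(1)] v(2) by simp
  define u where "u = (1 / sqrt (v \<bullet> v)) \<cdot>\<^sub>v v"
  have u: "u \<in> carrier_vec (Suc n)" unfolding u_def using v(1) by simp
  have "u \<bullet> u = (1 / sqrt (v \<bullet> v)) * (1 / sqrt (v \<bullet> v)) * (v \<bullet> v)"
    unfolding u_def using v(1) by (simp add: scalar_prod_smult_distrib smult_scalar_prod_distrib)
  also have "\<dots> = 1"
  proof -
    have "sqrt (v \<bullet> v) * sqrt (v \<bullet> v) = v \<bullet> v" using vpos by simp
    thus ?thesis using vpos by (simp add: field_simps)
  qed
  finally have u1: "u \<bullet> u = 1" .
  have Au: "A *\<^sub>v u = e \<cdot>\<^sub>v u" unfolding u_def using v A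
    by (simp add: mult_mat_vec smult_smult_assoc mult.commute)
  obtain W where W: "W \<in> carrier_mat (Suc n) (Suc n)" and WW: "transpose_mat W * W = 1\<^sub>m (Suc n)"
    and W0: "col W 0 = u" using unit_completion[OF u u1] by blast
  have WW': "W * transpose_mat W = 1\<^sub>m (Suc n)" using orth_right[OF W WW] .
  have WT: "transpose_mat W \<in> carrier_mat (Suc n) (Suc n)" using W by simp
  define A' where "A' = transpose_mat W * A * W"
  have A': "A' \<in> carrier_mat (Suc n) (Suc n)" unfolding A'_def using W A by simp
  have symA': "transpose_mat A' = A'"
  proof -
    have "transpose_mat A' = transpose_mat W * transpose_mat (transpose_mat W * A)"
      unfolding A'_def by (rule transpose_mult[of _ "Suc n" "Suc n"], insert W A, auto)
    also have "transpose_mat (transpose_mat W * A) = transpose_mat A * W"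
      by (subst transpose_mult[of _ "Suc n" "Suc n"], insert W A, auto)
    finally show ?thesis unfolding A'_def using sym W A
      by (simp add: assoc_mult_mat[of _ "Suc n" "Suc n" _ "Suc n" _ "Suc n"])
  qed
  have A'col: "\<And>i. i < Suc n \<Longrightarrow> A' $$ (i,0) = (if i = 0 then e else 0)"
  proof -
    fix i assume i: "i < Suc n"
    have "A' $$ (i,0) = (transpose_mat W * (A * W)) $$ (i,0)"
      unfolding A'_def using W A by (simp add: assoc_mult_mat[of _ "Suc n" "Suc n" _ "Suc n" _ "Suc n"])
    also have "\<dots> = col W i \<bullet> col (A * W) 0" using i W A by simp
    also have "col (A * W) 0 = A *\<^sub>v col W 0" using W A by (simp add: mult_mat_vec_def)
    also have "\<dots> = e \<cdot>\<^sub>v col W 0" using Au W0 by simp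
    also have "col W i \<bullet> (e \<cdot>\<^sub>v col W 0) = e * (col W i \<bullet> col W 0)"
      using W by (simp add: scalar_prod_smult_distrib)
    also have "col W i \<bullet> col W 0 = (transpose_mat W * W) $$ (i,0)" using W i by simp
    also have "\<dots> = (if i = 0 then 1 else 0)" unfolding WW using i by simp
    finally show "A' $$ (i,0) = (if i = 0 then e else 0)" by simp
  qed
  have A'row: "\<And>j. j < Suc n \<Longrightarrow> A' $$ (0,j) = (if j = 0 then e else 0)"
  proof -
    fix j assume j: "j < Suc n"
    have "A' $$ (0,j) = transpose_mat A' $$ (j,0)" using A' j by simp
    thus "A' $$ (0,j) = (if j = 0 then e else 0)" using symA' A'col[OF j] by simp
  qed
  define A3 where "A3 = mat n n (\<lambda>(i,j). A' $$ (Suc i, Suc j))"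
  have A3: "A3 \<in> carrier_mat n n" unfolding A3_def by simp
  have symA3: "transpose_mat A3 = A3"
  proof (rule eq_matI)
    fix i j assume "i < dim_row A3" "j < dim_col A3"
    hence i: "i < n" and j: "j < n" using A3 by auto
    have "A' $$ (Suc j, Suc i) = transpose_mat A' $$ (Suc i, Suc j)" using A' i j by simp
    thus "transpose_mat A3 $$ (i,j) = A3 $$ (i,j)" unfolding A3_def using i j symA' by simp
  qed (use A3 in auto)
  define E1 where "E1 = mat 1 1 (\<lambda>_. e)"
  have E1: "E1 \<in> carrier_mat 1 1" unfolding E1_def by simp
  have A'blk: "A' = four_block_mat E1 (0\<^sub>m 1 n) (0\<^sub>m n 1) A3"
  proof (rule eq_matI)
    fix i j assume "i < dim_row (four_block_mat E1 (0\<^sub>m 1 n) (0\<^sub>m n 1) A3)"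
      "j < dim_col (four_block_mat E1 (0\<^sub>m 1 n) (0\<^sub>m n 1) A3)"
    hence i: "i < Suc n" and j: "j < Suc n" using E1 A3 by auto
    show "A' $$ (i,j) = four_block_mat E1 (0\<^sub>m 1 n) (0\<^sub>m n 1) A3 $$ (i,j)"
    proof (cases "i = 0 \<or> j = 0")
      case True thus ?thesis using A'col A'row i j E1 A3 unfolding E1_def by auto
    next
      case False
      then obtain i' j' where "i = Suc i'" "j = Suc j'" by (metis not0_implies_Suc)
      thus ?thesis using i j E1 A3 unfolding A3_def E1_def by simp
    qed
  qed (use A' E1 A3 in auto)
  have "similar_mat A A'"
    unfolding similar_mat_def similar_mat_wit_def
    apply (rule exI[of _ W], rule exI[of _ "transpose_mat W"])
    using A A' W WW WW' conj_cancel[OF W A WW'] unfolding A'_def by auto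
  hence cpA: "char_poly A = char_poly E1 * char_poly A3"
    using char_poly_similar[of A A'] A'blk char_poly_four_block_zeros_col[OF E1 _ A3, of "0\<^sub>m 1 n"] by simp
  have rootsA3: "\<And>x. poly (char_poly A3) x = 0 \<Longrightarrow> x \<in> R"
    unfolding R_def cpA by simp
  from Suc.IH[OF A3 symA3] obtain V3 D3 where V3: "V3 \<in> carrier_mat n n" and D3: "D3 \<in> carrier_mat n n"
    and V3V3: "transpose_mat V3 * V3 = 1\<^sub>m n" and dD3: "diagm n D3" and sD3: "sortd n D3"
    and rD3: "\<forall>i<n. poly (char_poly A3) (D3$$(i,i)) = 0" and A3eq: "A3 = V3 * D3 * transpose_mat V3"
    by blast
  define B where "B = four_block_mat (1\<^sub>m 1) (0\<^sub>m 1 n) (0\<^sub>m n 1) V3"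
  define D where "D = four_block_mat E1 (0\<^sub>m 1 n) (0\<^sub>m n 1) D3"
  define V where "V = W * B"
  have B: "B \<in> carrier_mat (Suc n) (Suc n)" unfolding B_def using four_block_carrier_mat[OF one_carrier_mat V3, of 1] by simp
  have D: "D \<in> carrier_mat (Suc n) (Suc n)" unfolding D_def using four_block_carrier_mat[OF E1 D3] by simp
  have V: "V \<in> carrier_mat (Suc n) (Suc n)" unfolding V_def using W B by simp
  have BT: "transpose_mat B = four_block_mat (1\<^sub>m 1) (0\<^sub>m 1 n) (0\<^sub>m n 1) (transpose_mat V3)"
    unfolding B_def by (subst transpose_four_block_mat, insert V3, auto)
  have BTB: "transpose_mat B * B = 1\<^sub>m (Suc n)"
    unfolding BT unfolding B_def
    by (subst mult_four_block_mat[of _ 1 1 _ n _ n _ _ 1 _ n], insert V3 V3V3, auto)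
  have BD: "B * D = four_block_mat E1 (0\<^sub>m 1 n) (0\<^sub>m n 1) (V3 * D3)"
    unfolding B_def D_def
    by (subst mult_four_block_mat[of _ 1 1 _ n _ n _ _ 1 _ n], insert V3 D3 E1, auto)
  have BDB: "B * D * transpose_mat B = A'"
    unfolding BD BT A'blk A3eq
    by (subst mult_four_block_mat[of _ 1 1 _ n _ n _ _ 1 _ n], insert V3 D3 E1, auto)
  have VT: "transpose_mat V = transpose_mat B * transpose_mat W"
    unfolding V_def by (rule transpose_mult[OF W B])
  have "transpose_mat V * V = 1\<^sub>m (Suc n)"
  proof -
    have "transpose_mat V * V = transpose_mat B * (transpose_mat W * W) * B"
      unfolding VT unfolding V_def using W B by (simp add: assoc_mult_mat[of _ "Suc n" "Suc n" _ "Suc n" _ "Suc n"])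
    thus ?thesis using WW BTB B by simp
  qed
  moreover have "A = V * D * transpose_mat V"
  proof -
    have "V * D * transpose_mat V = W * (B * D * transpose_mat B) * transpose_mat W"
      unfolding VT unfolding V_def using W B D by (simp add: assoc_mult_mat[of _ "Suc n" "Suc n" _ "Suc n" _ "Suc n"])
    also have "\<dots> = W * (transpose_mat W * A * W) * transpose_mat W" unfolding BDB A'_def ..
    also have "\<dots> = A" by (rule conj_cancel[OF W A WW'])
    finally show ?thesis by simp
  qed
  moreover have Dii: "\<And>i. i < Suc n \<Longrightarrow> D $$ (i,i) = (if i = 0 then e else D3 $$ (i - 1, i - 1))"
    unfolding D_def E1_def using D3 by auto
  have "diagm (Suc n) D"
    unfolding diagm_def D_def E1_def using dD3 D3 unfolding diagm_def by auto
  moreover have rD: "\<forall>i<Suc n. poly (char_poly A) (D$$(i,i)) = 0"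
  proof (intro allI impI)
    fix i assume i: "i < Suc n"
    show "poly (char_poly A) (D$$(i,i)) = 0"
    proof (cases i)
      case 0 thus ?thesis using Dii[OF i] eR unfolding R_def by simp
    next
      case (Suc i') thus ?thesis using Dii[OF i] rD3 rootsA3[of "D3 $$ (i',i')"] i unfolding R_def by simp
    qed
  qed
  moreover have "sortd (Suc n) D"
    unfolding sortd_def
  proof (intro allI impI)
    fix i j assume ij: "i \<le> j \<and> j < Suc n"
    show "D $$ (j,j) \<le> D $$ (i,i)"
    proof (cases i)
      case 0
      have "D $$ (j,j) \<in> R" using rD ij unfolding R_def by auto
      thus ?thesis using emax 0 Dii ij by auto
    next
      case (Suc i')
      then obtain j' where "j = Suc j'" using ij by (cases j) auto
      thus ?thesis using Suc Dii ij sD3 unfolding sortd_def by auto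
    qed
  qed
  ultimately show ?case using V D by blast
qed

definition tr :: "real mat \<Rightarrow> real" where "tr M = (\<Sum>i<dim_row M. M $$ (i,i))"

lemma mult_entry:
  fixes A B :: "real mat"
  assumes "A \<in> carrier_mat m n" "B \<in> carrier_mat n p" "i < m" "j < p"
  shows "(A * B) $$ (i,j) = (\<Sum>k<n. A $$ (i,k) * B $$ (k,j))"
  using assms by (simp add: scalar_prod_def lessThan_atLeast0)

lemma tr_mult_comm:
  fixes A B :: "real mat"
  assumes A: "A \<in> carrier_mat m n" and B: "B \<in> carrier_mat n m"
  shows "tr (A * B) = tr (B * A)"
proof -
  have "tr (A * B) = (\<Sum>i<m. (A * B) $$ (i,i))" unfolding tr_def using A B by simp
  also have "\<dots> = (\<Sum>i<m. \<Sum>j<n. A $$ (i,j) * B $$ (j,i))"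
    by (rule sum.cong[OF refl], rule mult_entry[OF A B], auto)
  also have "\<dots> = (\<Sum>j<n. \<Sum>i<m. B $$ (j,i) * A $$ (i,j))"
    by (subst sum.swap) (simp add: mult.commute)
  also have "\<dots> = (\<Sum>j<n. (B * A) $$ (j,j))"
    by (rule sum.cong[OF refl], rule mult_entry[OF B A, symmetric], auto)
  also have "\<dots> = tr (B * A)" unfolding tr_def using A B by simp
  finally show ?thesis .
qed

lemma tr_one[simp]: "tr (1\<^sub>m n) = real n"
  unfolding tr_def by simp

lemma tr_minus:
  fixes A B :: "real mat"
  assumes "A \<in> carrier_mat n n" "B \<in> carrier_mat n n"
  shows "tr (A - B) = tr A - tr B"
  using assms unfolding tr_def by (simp add: sum_subtractf)

lemma tr_orth_id: "tr (1\<^sub>m k :: real mat) = k" by simp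

lemma orth_cancel_left:
  fixes W X :: "real mat"
  assumes W: "W \<in> carrier_mat n n" and WW: "W * transpose_mat W = 1\<^sub>m n" and X: "X \<in> carrier_mat n p"
  shows "W * (transpose_mat W * X) = X"
proof -
  have "W * (transpose_mat W * X) = (W * transpose_mat W) * X"
    using W X by (simp add: assoc_mult_mat[of _ n n _ n _ p])
  thus ?thesis using WW X by simp
qed

lemma sandwich_mult:
  fixes W A B :: "real mat"
  assumes W: "W \<in> carrier_mat n n" and WW: "W * transpose_mat W = 1\<^sub>m n"
    and A: "A \<in> carrier_mat n n" and B: "B \<in> carrier_mat n n"
  shows "(transpose_mat W * A * W) * (transpose_mat W * B * W) = transpose_mat W * (A * B) * W"
proof -
  have WT: "transpose_mat W \<in> carrier_mat n n" using W by simp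
  have "(transpose_mat W * A * W) * (transpose_mat W * B * W) = transpose_mat W * (A * (W * (transpose_mat W * (B * W))))"
    using W WT A B by (simp add: assoc_mult_mat[of _ n n _ n _ n])
  also have "W * (transpose_mat W * (B * W)) = B * W" using orth_cancel_left[OF W WW, of "B * W" n] B W by simp
  finally show ?thesis using W WT A B by (simp add: assoc_mult_mat[of _ n n _ n _ n])
qed

lemma orth_completion:
  fixes Uk :: "real mat"
  assumes Uk: "Uk \<in> carrier_mat n k" and UU: "transpose_mat Uk * Uk = 1\<^sub>m k"
  shows "\<exists>U. U \<in> carrier_mat n n \<and> transpose_mat U * U = 1\<^sub>m n \<and> (\<forall>i<k. col U i = col Uk i) \<and> k \<le> n"
proof -
  have UkT: "transpose_mat Uk \<in> carrier_mat k n" using Uk by simp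
  define Q where "Q = Uk * transpose_mat Uk"
  have Q: "Q \<in> carrier_mat n n" unfolding Q_def using Uk by simp
  define M where "M = 1\<^sub>m n - Q"
  have M: "M \<in> carrier_mat n n" unfolding M_def using Q by (simp add: minus_carrier_mat)
  have QQ: "Q * Q = Q"
  proof -
    have "Q * Q = Uk * (transpose_mat Uk * (Uk * transpose_mat Uk))"
      unfolding Q_def using Uk UkT by (simp add: assoc_mult_mat[of _ n k _ n _ n])
    also have "transpose_mat Uk * (Uk * transpose_mat Uk) = (transpose_mat Uk * Uk) * transpose_mat Uk"
      using Uk UkT by (simp add: assoc_mult_mat[of _ k n _ k _ n])
    finally have "Q * Q = Uk * ((transpose_mat Uk * Uk) * transpose_mat Uk)" .
    thus ?thesis using UU Uk unfolding Q_def by simp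
  qed
  have MQ: "M * Q = 0\<^sub>m n n"
    unfolding M_def using Q QQ by (simp add: minus_mult_distrib_mat[of _ n n])
  have MM: "M * M = M"
  proof -
    have "M * M = M * (1\<^sub>m n - Q)" unfolding M_def ..
    also have "\<dots> = M * 1\<^sub>m n - M * Q" by (rule mult_minus_distrib_mat[OF M], insert Q, auto)
    also have "\<dots> = M" unfolding MQ using M by (intro eq_matI) auto
    finally show ?thesis .
  qed
  have symQ: "transpose_mat Q = Q" unfolding Q_def using transpose_mult[OF Uk UkT] by simp
  have symM: "transpose_mat M = M" unfolding M_def by (subst transpose_minus[of _ n n], insert Q symQ, auto)
  obtain W E where W: "W \<in> carrier_mat n n" and E: "E \<in> carrier_mat n n"
    and WW: "transpose_mat W * W = 1\<^sub>m n" and dE: "diagm n E" and sE: "sortd n E"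
    and Meq: "M = W * E * transpose_mat W"
    using spectral[OF M symM] by blast
  have WW': "W * transpose_mat W = 1\<^sub>m n" using orth_right[OF W WW] .
  have WT: "transpose_mat W \<in> carrier_mat n n" using W by simp
  have WTT: "transpose_mat W * transpose_mat (transpose_mat W) = 1\<^sub>m n" using WW by simp
  have Eeq: "E = transpose_mat W * M * W"
    using conj_cancel[OF WT E WTT] unfolding Meq by simp
  have EE: "E * E = E"
    unfolding Eeq sandwich_mult[OF W WW' M M] MM ..
  have E01: "\<And>i. i < n \<Longrightarrow> E $$ (i,i) = 0 \<or> E $$ (i,i) = 1"
  proof -
    fix i assume i: "i < n"
    have "(E * E) $$ (i,i) = (\<Sum>j<n. E $$ (i,j) * E $$ (j,i))" by (rule mult_entry[OF E E i i])
    also have "\<dots> = (\<Sum>j\<in>{i}. E $$ (i,j) * E $$ (j,i))"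
      by (rule sum.mono_neutral_right) (use i dE in \<open>auto simp: diagm_def\<close>)
    finally have "E $$ (i,i) * E $$ (i,i) = E $$ (i,i)" using EE by simp
    thus "E $$ (i,i) = 0 \<or> E $$ (i,i) = 1" by (metis mult_cancel_right1 mult_eq_0_iff)
  qed
  define t where "t = (LEAST i. i = n \<or> E $$ (i,i) \<noteq> 1)"
  have tn: "t \<le> n" unfolding t_def by (rule Least_le) simp
  have Elt: "\<And>i. i < t \<Longrightarrow> E $$ (i,i) = 1"
    using not_less_Least[of _ "\<lambda>i. i = n \<or> E $$ (i,i) \<noteq> 1"] unfolding t_def[symmetric] by blast
  have Ege: "\<And>i. t \<le> i \<Longrightarrow> i < n \<Longrightarrow> E $$ (i,i) = 0"
  proof -
    fix i assume ti: "t \<le> i" and i: "i < n"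
    have "t = n \<or> E $$ (t,t) \<noteq> 1" unfolding t_def by (rule LeastI[of _ n]) simp
    hence "E $$ (t,t) = 0" using ti i E01[of t] by auto
    moreover have "E $$ (i,i) \<le> E $$ (t,t)" using sE ti i unfolding sortd_def by auto
    ultimately show "E $$ (i,i) = 0" using E01[OF i] by auto
  qed
  have trE: "tr E = real t"
  proof -
    have "tr E = (\<Sum>i<n. E $$ (i,i))" unfolding tr_def using E by simp
    also have "\<dots> = (\<Sum>i<t. E $$ (i,i))"
      by (rule sum.mono_neutral_right) (use tn Ege in auto)
    also have "\<dots> = (\<Sum>i<t. 1)" using Elt by simp
    finally show ?thesis by simp
  qed
  have trM: "tr M = tr E"
  proof -
    have "tr M = tr ((W * E) * transpose_mat W)" unfolding Meq ..
    also have "\<dots> = tr (transpose_mat W * (W * E))" by (rule tr_mult_comm[of _ n n], insert W E, auto)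
    also have "transpose_mat W * (W * E) = E" using W E WW by (simp add: assoc_mult_mat[of _ n n _ n _ n, symmetric])
    finally show ?thesis .
  qed
  have trQ: "tr Q = real k"
    unfolding Q_def using tr_mult_comm[OF Uk UkT] UU by simp
  have trM2: "tr M = real n - real k" unfolding M_def using tr_minus[OF _ Q, of "1\<^sub>m n"] trQ by simp
  have tk: "t + k = n" using trM trM2 trE by linarith
  have MW: "\<And>a i. a < n \<Longrightarrow> i < t \<Longrightarrow> (M * W) $$ (a,i) = W $$ (a,i)"
  proof -
    fix a i assume a: "a < n" and i: "i < t"
    have "M * W = W * E" unfolding Meq using W E WW
      by (simp add: assoc_mult_mat[of _ n n _ n _ n])
    hence "(M * W) $$ (a,i) = (\<Sum>j<n. W $$ (a,j) * E $$ (j,i))" using mult_entry[OF W E a] i tn by simp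
    also have "\<dots> = (\<Sum>j\<in>{i}. W $$ (a,j) * E $$ (j,i))"
      by (rule sum.mono_neutral_right) (use i tn dE in \<open>auto simp: diagm_def\<close>)
    finally show "(M * W) $$ (a,i) = W $$ (a,i)" using Elt[OF i] by simp
  qed
  have UkM: "transpose_mat Uk * M = 0\<^sub>m k n"
  proof -
    have "transpose_mat Uk * M = transpose_mat Uk * 1\<^sub>m n - transpose_mat Uk * Q"
      unfolding M_def by (rule mult_minus_distrib_mat[OF UkT], insert Q, auto)
    also have "transpose_mat Uk * Q = (transpose_mat Uk * Uk) * transpose_mat Uk"
      unfolding Q_def using Uk UkT by (simp add: assoc_mult_mat[of _ k n _ k _ n])
    finally show ?thesis using UU UkT by (intro eq_matI) auto
  qed
  have orthUW: "\<And>j i. j < k \<Longrightarrow> i < t \<Longrightarrow> col Uk j \<bullet> col W i = 0"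
  proof -
    fix j i assume j: "j < k" and i: "i < t"
    have "(transpose_mat Uk * (M * W)) $$ (j,i) = 0"
      using UkT M W j i tn by (simp add: assoc_mult_mat[of _ k n _ n _ n, symmetric] UkM)
    moreover have "(transpose_mat Uk * (M * W)) $$ (j,i) = (\<Sum>a<n. transpose_mat Uk $$ (j,a) * (M * W) $$ (a,i))"
      by (rule mult_entry[of "transpose_mat Uk" k n "M * W" n j i], insert Uk M W i tn j, auto)
    moreover have "\<dots> = (\<Sum>a<n. transpose_mat Uk $$ (j,a) * W $$ (a,i))" using MW i by simp
    moreover have "\<dots> = (transpose_mat Uk * W) $$ (j,i)"
      by (rule mult_entry[of "transpose_mat Uk" k n W n j i, symmetric], insert Uk W i tn j, auto)
    ultimately show "col Uk j \<bullet> col W i = 0" using Uk W j i tn by simp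
  qed
  define vs where "vs = map (col Uk) [0..<k] @ map (col W) [0..<t]"
  define U where "U = mat_of_cols n vs"
  have lvs: "length vs = n" unfolding vs_def using tk by simp
  have U: "U \<in> carrier_mat n n" unfolding U_def using mat_of_cols_carrier(1)[of n vs] lvs by simp
  have colU: "\<And>i. i < n \<Longrightarrow> col U i = (if i < k then col Uk i else col W (i - k))"
  proof -
    fix i assume i: "i < n"
    have vi: "vs ! i = (if i < k then col Uk i else col W (i - k))"
      unfolding vs_def using i tk by (simp add: nth_append)
    have "vs ! i \<in> carrier_vec n" unfolding vi using col_dim[of Uk i] col_dim[of W "i - k"] Uk W by auto
    hence "col U i = vs ! i" unfolding U_def using col_mat_of_cols[of i vs n] i lvs by simp
    thus "col U i = (if i < k then col Uk i else col W (i - k))" using vi by simp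
  qed
  have "transpose_mat U * U = 1\<^sub>m n"
  proof (rule eq_matI)
    fix i j assume "i < dim_row (1\<^sub>m n)" "j < dim_col (1\<^sub>m n)"
    hence i: "i < n" and j: "j < n" by auto
    have e: "(transpose_mat U * U) $$ (i,j) = col U i \<bullet> col U j" using U i j by simp
    have cUk: "\<And>a b. a < k \<Longrightarrow> b < k \<Longrightarrow> col Uk a \<bullet> col Uk b = 1\<^sub>m k $$ (a,b)"
    proof -
      fix a b assume a: "a < k" and b: "b < k"
      have "(transpose_mat Uk * Uk) $$ (a,b) = col Uk a \<bullet> col Uk b" using Uk a b by simp
      thus "col Uk a \<bullet> col Uk b = 1\<^sub>m k $$ (a,b)" using UU by simp
    qed
    have cW: "\<And>a b. a < n \<Longrightarrow> b < n \<Longrightarrow> col W a \<bullet> col W b = 1\<^sub>m n $$ (a,b)"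
    proof -
      fix a b assume a: "a < n" and b: "b < n"
      have "(transpose_mat W * W) $$ (a,b) = col W a \<bullet> col W b" using W a b by simp
      thus "col W a \<bullet> col W b = 1\<^sub>m n $$ (a,b)" using WW by simp
    qed
    show "(transpose_mat U * U) $$ (i,j) = 1\<^sub>m n $$ (i,j)"
      unfolding e colU[OF i] colU[OF j]
    proof (cases "i < k"; cases "j < k")
      assume "i < k" "j < k" thus "(if i < k then col Uk i else col W (i - k)) \<bullet> (if j < k then col Uk j else col W (j - k)) = 1\<^sub>m n $$ (i, j)" using cUk i j by simp
    next
      assume a: "i < k" "\<not> j < k"
      have "col Uk i \<bullet> col W (j - k) = 0" using orthUW[of i "j - k"] a j tk by simp
      thus "(if i < k then col Uk i else col W (i - k)) \<bullet> (if j < k then col Uk j else col W (j - k)) = 1\<^sub>m n $$ (i, j)" using a i j by simp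
    next
      assume a: "\<not> i < k" "j < k"
      have "col Uk j \<bullet> col W (i - k) = 0" using orthUW[of j "i - k"] a i tk by simp
      hence "col W (i - k) \<bullet> col Uk j = 0" using comm_scalar_prod[OF col_dim[of W "i - k"], of "col Uk j"] col_dim[of Uk j] Uk W by simp
      thus "(if i < k then col Uk i else col W (i - k)) \<bullet> (if j < k then col Uk j else col W (j - k)) = 1\<^sub>m n $$ (i, j)" using a i j by simp
    next
      assume a: "\<not> i < k" "\<not> j < k"
      have "col W (i - k) \<bullet> col W (j - k) = 1\<^sub>m n $$ (i - k, j - k)" using cW[of "i - k" "j - k"] i j by simp
      thus "(if i < k then col Uk i else col W (i - k)) \<bullet> (if j < k then col Uk j else col W (j - k)) = 1\<^sub>m n $$ (i, j)" using a i j by auto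
    qed
  qed (use U in auto)
  moreover have "\<forall>i<k. col U i = col Uk i" using colU tk by simp
  moreover have "k \<le> n" using tk by simp
  ultimately show ?thesis using U by blast
qed

lemma col_sprod_orth:
  fixes V :: "real mat"
  assumes V: "V \<in> carrier_mat n n" and VV: "transpose_mat V * V = 1\<^sub>m n" and i: "i < n" and j: "j < n"
  shows "col V i \<bullet> col V j = (if i = j then 1 else 0)"
proof -
  have "(transpose_mat V * V) $$ (i,j) = col V i \<bullet> col V j" using V i j by simp
  thus ?thesis using VV i j by simp
qed

lemma svd_exists_sq:
  fixes Z :: "real mat"
  assumes Z: "Z \<in> carrier_mat n n"
  shows "\<exists>U S V. is_svd Z U S V"
proof -
  have ZT: "transpose_mat Z \<in> carrier_mat n n" using Z by simp
  define G where "G = transpose_mat Z * Z"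
  have G: "G \<in> carrier_mat n n" unfolding G_def using Z by simp
  have symG: "transpose_mat G = G" unfolding G_def using transpose_mult[OF ZT Z] by simp
  obtain V D where V: "V \<in> carrier_mat n n" and D: "D \<in> carrier_mat n n"
    and VV: "transpose_mat V * V = 1\<^sub>m n" and dD: "diagm n D" and sD: "sortd n D"
    and Geq: "G = V * D * transpose_mat V"
    using spectral[OF G symG] by blast
  have VV': "V * transpose_mat V = 1\<^sub>m n" using orth_right[OF V VV] .
  have VT: "transpose_mat V \<in> carrier_mat n n" using V by simp
  have VTT: "transpose_mat V * transpose_mat (transpose_mat V) = 1\<^sub>m n" using VV by simp
  define Y where "Y = Z * V"
  have Y: "Y \<in> carrier_mat n n" unfolding Y_def using Z V by simp
  have YY: "transpose_mat Y * Y = D"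
  proof -
    have "transpose_mat Y * Y = transpose_mat V * (transpose_mat Z * Z) * V"
      unfolding Y_def using transpose_mult[OF Z V] Z V ZT VT
      by (simp add: assoc_mult_mat[of _ n n _ n _ n])
    also have "\<dots> = D" unfolding G_def[symmetric] Geq using conj_cancel[OF VT D VTT] by simp
    finally show ?thesis .
  qed
  have Ycol: "\<And>i j. i < n \<Longrightarrow> j < n \<Longrightarrow> col Y i \<bullet> col Y j = D $$ (i,j)"
  proof -
    fix i j assume i: "i < n" and j: "j < n"
    have "(transpose_mat Y * Y) $$ (i,j) = col Y i \<bullet> col Y j" using Y i j by simp
    thus "col Y i \<bullet> col Y j = D $$ (i,j)" using YY by simp
  qed
  have Dnn: "\<And>i. i < n \<Longrightarrow> D $$ (i,i) \<ge> 0"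
    using Ycol sprod_self_nonneg_real by metis
  define k where "k = (LEAST i. i = n \<or> D $$ (i,i) \<le> 0)"
  have kn: "k \<le> n" unfolding k_def by (rule Least_le) simp
  have Dlt: "\<And>i. i < k \<Longrightarrow> D $$ (i,i) > 0"
    using not_less_Least[of _ "\<lambda>i. i = n \<or> D $$ (i,i) \<le> 0"] unfolding k_def[symmetric] by force
  have Dge: "\<And>i. k \<le> i \<Longrightarrow> i < n \<Longrightarrow> D $$ (i,i) = 0"
  proof -
    fix i assume ki: "k \<le> i" and i: "i < n"
    have "k = n \<or> D $$ (k,k) \<le> 0" unfolding k_def by (rule LeastI[of _ n]) simp
    hence "D $$ (k,k) \<le> 0" using ki i by auto
    moreover have "D $$ (i,i) \<le> D $$ (k,k)" using sD ki i unfolding sortd_def by auto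
    ultimately show "D $$ (i,i) = 0" using Dnn[OF i] by auto
  qed
  have Y0: "\<And>i a. k \<le> i \<Longrightarrow> i < n \<Longrightarrow> a < n \<Longrightarrow> Y $$ (a,i) = 0"
  proof -
    fix i a assume ki: "k \<le> i" and i: "i < n" and a: "a < n"
    have "col Y i \<bullet> col Y i = 0" using Ycol[OF i i] Dge[OF ki i] by simp
    hence "col Y i = 0\<^sub>v n" using conjugate_square_eq_0_vec[of "col Y i" n] col_dim[of Y i] Y by simp
    hence "col Y i $ a = 0" using a by simp
    thus "Y $$ (a,i) = 0" using Y a i by simp
  qed
  define us where "us = map (\<lambda>i. (1 / sqrt (D $$ (i,i))) \<cdot>\<^sub>v col Y i) [0..<k]"
  define Uk where "Uk = mat_of_cols n us"
  have Uk: "Uk \<in> carrier_mat n k" unfolding Uk_def using mat_of_cols_carrier(1)[of n us] by (simp add: us_def)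
  have colUk: "\<And>i. i < k \<Longrightarrow> col Uk i = (1 / sqrt (D $$ (i,i))) \<cdot>\<^sub>v col Y i"
  proof -
    fix i assume i: "i < k"
    have "us ! i = (1 / sqrt (D $$ (i,i))) \<cdot>\<^sub>v col Y i" unfolding us_def using i by simp
    moreover have "us ! i \<in> carrier_vec n" using calculation col_dim[of Y i] Y by simp
    ultimately show "col Uk i = (1 / sqrt (D $$ (i,i))) \<cdot>\<^sub>v col Y i"
      unfolding Uk_def using col_mat_of_cols[of i us n] i by (simp add: us_def)
  qed
  have UkUk: "transpose_mat Uk * Uk = 1\<^sub>m k"
  proof (rule eq_matI)
    fix i j assume "i < dim_row (1\<^sub>m k)" "j < dim_col (1\<^sub>m k)"
    hence i: "i < k" and j: "j < k" by auto
    have "(transpose_mat Uk * Uk) $$ (i,j) = col Uk i \<bullet> col Uk j" using Uk i j by simp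
    also have "\<dots> = (1 / sqrt (D $$ (i,i))) * (1 / sqrt (D $$ (j,j))) * (col Y i \<bullet> col Y j)"
      unfolding colUk[OF i] colUk[OF j] using col_dim[of Y i] col_dim[of Y j]
      by (simp add: scalar_prod_smult_distrib smult_scalar_prod_distrib)
    also have "\<dots> = 1\<^sub>m k $$ (i,j)"
    proof (cases "i = j")
      case True
      have p: "D $$ (i,i) > 0" using Dlt[OF i] .
      have "sqrt (D $$ (i,i)) * sqrt (D $$ (i,i)) = D $$ (i,i)" using p by simp
      thus ?thesis using True i p Ycol[of i i] kn by (simp add: field_simps)
    next
      case False thus ?thesis using Ycol[of i j] dD i j kn unfolding diagm_def by simp
    qed
    finally show "(transpose_mat Uk * Uk) $$ (i,j) = 1\<^sub>m k $$ (i,j)" .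
  qed (use Uk in auto)
  obtain U where U: "U \<in> carrier_mat n n" and UU: "transpose_mat U * U = 1\<^sub>m n"
    and colU: "\<forall>i<k. col U i = col Uk i"
    using orth_completion[OF Uk UkUk] by blast
  define S where "S = mat n n (\<lambda>(i,j). if i = j then sqrt (D $$ (i,i)) else 0)"
  have S: "S \<in> carrier_mat n n" unfolding S_def by simp
  have YUS: "Y = U * S"
  proof (rule eq_matI)
    fix a i assume "a < dim_row (U * S)" "i < dim_col (U * S)"
    hence a: "a < n" and i: "i < n" using U S by auto
    have "(U * S) $$ (a,i) = (\<Sum>j<n. U $$ (a,j) * S $$ (j,i))" by (rule mult_entry[OF U S a i])
    also have "\<dots> = (\<Sum>j\<in>{i}. U $$ (a,j) * S $$ (j,i))"
      by (rule sum.mono_neutral_right) (use i in \<open>auto simp: S_def\<close>)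
    also have "\<dots> = U $$ (a,i) * sqrt (D $$ (i,i))" using i by (simp add: S_def)
    also have "\<dots> = Y $$ (a,i)"
    proof (cases "i < k")
      case True
      have "U $$ (a,i) = col U i $ a" using U a i by simp
      also have "\<dots> = (1 / sqrt (D $$ (i,i))) * Y $$ (a,i)" using colU colUk[OF True] True a Y i by simp
      finally show ?thesis using Dlt[OF True] by simp
    next
      case False thus ?thesis using Dge[of i] Y0[of i a] i a by simp
    qed
    finally show "Y $$ (a,i) = (U * S) $$ (a,i)" by simp
  qed (use Y U S in auto)
  have Zeq: "Z = U * S * transpose_mat V"
  proof -
    have "Z = Z * (V * transpose_mat V)" using VV' Z by simp
    also have "\<dots> = Y * transpose_mat V" unfolding Y_def using Z V VT by (simp add: assoc_mult_mat[of _ n n _ n _ n])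
    finally show ?thesis unfolding YUS .
  qed
  have "is_svd Z U S V"
    unfolding is_svd_def Let_def
  proof (intro conjI)
    show "\<forall>i<dim_row Z. \<forall>j<dim_col Z. i \<noteq> j \<longrightarrow> S $$ (i, j) = 0" using Z by (simp add: S_def)
    show "\<forall>i<min (dim_row Z) (dim_col Z). 0 \<le> S $$ (i, i)" using Z Dnn by (simp add: S_def)
    show "\<forall>i j. i \<le> j \<and> j < min (dim_row Z) (dim_col Z) \<longrightarrow> S $$ (j, j) \<le> S $$ (i, i)"
      using Z sD unfolding sortd_def by (simp add: S_def)
  qed (use Z U S V UU VV Zeq in auto)
  thus ?thesis by blast
qed

definition subcols :: "real mat \<Rightarrow> nat \<Rightarrow> real mat" where
  "subcols W p = mat (dim_row W) p (\<lambda>(a,j). W $$ (a,j))"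

lemma subcols_carrier: "W \<in> carrier_mat n m \<Longrightarrow> subcols W p \<in> carrier_mat n p"
  unfolding subcols_def by simp

lemma subcols_full: "W \<in> carrier_mat n n \<Longrightarrow> subcols W n = W"
  unfolding subcols_def by (intro eq_matI) auto

lemma two_sprod_le:
  fixes a b :: "real vec"
  assumes a: "a \<in> carrier_vec p" and b: "b \<in> carrier_vec p"
  shows "2 * (a \<bullet> b) \<le> a \<bullet> a + b \<bullet> b"
proof -
  have e: "\<And>v w :: real vec. w \<in> carrier_vec p \<Longrightarrow> v \<bullet> w = (\<Sum>i\<in>{0..<p}. v$i * w$i)"
    by (simp add: scalar_prod_def)
  have pt: "\<And>i. (a$i - b$i)^2 = a$i * a$i + b$i * b$i - 2 * (a$i * b$i)"
    by (simp add: power2_eq_square algebra_simps)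
  have "(\<Sum>i\<in>{0..<p}. (a$i - b$i)^2) = (\<Sum>i\<in>{0..<p}. a$i * a$i) + (\<Sum>i\<in>{0..<p}. b$i * b$i) - 2 * (\<Sum>i\<in>{0..<p}. a$i * b$i)"
    unfolding pt by (simp add: sum.distrib sum_subtractf sum_distrib_left)
  hence "a \<bullet> a + b \<bullet> b - 2 * (a \<bullet> b) = (\<Sum>i\<in>{0..<p}. (a$i - b$i)^2)"
    using e[OF a, of a] e[OF b, of b] e[OF b, of a] by simp
  moreover have "(\<Sum>i\<in>{0..<p}. (a$i - b$i)^2) \<ge> 0" by (rule sum_nonneg) simp
  ultimately show ?thesis by linarith
qed

lemma bessel_full:
  fixes W :: "real mat" and x :: "real vec"
  assumes W: "W \<in> carrier_mat n n" and WW: "transpose_mat W * W = 1\<^sub>m n" and x: "x \<in> carrier_vec n"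
  shows "(\<Sum>j<n. (col W j \<bullet> x)^2) = x \<bullet> x"
proof -
  have WW': "W * transpose_mat W = 1\<^sub>m n" using orth_right[OF W WW] .
  have WWe: "\<And>a b. a < n \<Longrightarrow> b < n \<Longrightarrow> (\<Sum>j<n. W $$ (a,j) * W $$ (b,j)) = (if a = b then 1 else 0)"
  proof -
    fix a b assume a: "a < n" and b: "b < n"
    have "(W * transpose_mat W) $$ (a,b) = (\<Sum>j<n. W $$ (a,j) * transpose_mat W $$ (j,b))"
      by (rule mult_entry[of _ n n _ n], insert W a b, auto)
    also have "\<dots> = (\<Sum>j<n. W $$ (a,j) * W $$ (b,j))" using W b by simp
    finally show "(\<Sum>j<n. W $$ (a,j) * W $$ (b,j)) = (if a = b then 1 else 0)" using WW' a b by simp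
  qed
  have cx: "\<And>j. j < n \<Longrightarrow> col W j \<bullet> x = (\<Sum>a<n. W $$ (a,j) * x $ a)"
    using W x by (simp add: scalar_prod_def lessThan_atLeast0)
  have sq: "\<And>j. j < n \<Longrightarrow> (col W j \<bullet> x)^2 = (\<Sum>a<n. \<Sum>b<n. (W $$ (a,j) * x $ a) * (W $$ (b,j) * x $ b))"
    by (simp add: cx power2_eq_square sum_product)
  have "(\<Sum>j<n. (col W j \<bullet> x)^2) = (\<Sum>j<n. \<Sum>a<n. \<Sum>b<n. x$a * x$b * (W $$ (a,j) * W $$ (b,j)))"
    by (intro sum.cong refl) (simp add: sq mult_ac)
  also have "\<dots> = (\<Sum>a<n. \<Sum>j<n. \<Sum>b<n. x$a * x$b * (W $$ (a,j) * W $$ (b,j)))"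
    by (rule sum.swap)
  also have "\<dots> = (\<Sum>a<n. \<Sum>b<n. \<Sum>j<n. x$a * x$b * (W $$ (a,j) * W $$ (b,j)))"
    by (rule sum.cong[OF refl], rule sum.swap)
  also have "\<dots> = (\<Sum>a<n. \<Sum>b<n. x$a * x$b * (\<Sum>j<n. W $$ (a,j) * W $$ (b,j)))"
    by (simp add: sum_distrib_left)
  also have "\<dots> = (\<Sum>a<n. \<Sum>b<n. x$a * x$b * (if a = b then 1 else 0))"
    by (intro sum.cong refl) (simp add: WWe)
  also have "\<dots> = (\<Sum>a<n. x$a * x$a)" by (simp add: if_distrib cong: if_cong)
  also have "\<dots> = x \<bullet> x" using x by (simp add: scalar_prod_def lessThan_atLeast0)
  finally show ?thesis .
qed

lemma bessel_sub:
  fixes W :: "real mat" and x :: "real vec"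
  assumes W: "W \<in> carrier_mat n n" and WW: "transpose_mat W * W = 1\<^sub>m n" and x: "x \<in> carrier_vec n"
    and p: "p \<le> n"
  shows "(transpose_mat (subcols W p) *\<^sub>v x) \<bullet> (transpose_mat (subcols W p) *\<^sub>v x) \<le> x \<bullet> x"
proof -
  define y where "y = transpose_mat (subcols W p) *\<^sub>v x"
  have Wp: "subcols W p \<in> carrier_mat n p" using subcols_carrier[OF W] .
  have y: "y \<in> carrier_vec p" unfolding y_def using Wp by (auto simp: mult_mat_vec_def)
  have yj: "\<And>j. j < p \<Longrightarrow> y $ j = col W j \<bullet> x"
  proof -
    fix j assume j: "j < p"
    have "y $ j = col (subcols W p) j \<bullet> x" unfolding y_def using Wp j by simp
    also have "col (subcols W p) j = col W j" using W j p by (intro eq_vecI) (auto simp: subcols_def)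
    finally show "y $ j = col W j \<bullet> x" .
  qed
  have "y \<bullet> y = (\<Sum>j<p. (col W j \<bullet> x)^2)"
    using y by (simp add: scalar_prod_def lessThan_atLeast0 yj power2_eq_square)
  also have "\<dots> \<le> (\<Sum>j<n. (col W j \<bullet> x)^2)"
    by (rule sum_mono2) (use p in auto)
  also have "\<dots> = x \<bullet> x" by (rule bessel_full[OF W WW x])
  finally show ?thesis unfolding y_def .
qed

lemma svd_parts:
  assumes Z: "Z \<in> carrier_mat n n" and svd: "is_svd Z U S V"
  shows "U \<in> carrier_mat n n" "S \<in> carrier_mat n n" "V \<in> carrier_mat n n"
    "transpose_mat U * U = 1\<^sub>m n" "transpose_mat V * V = 1\<^sub>m n"
    "\<And>i j. i < n \<Longrightarrow> j < n \<Longrightarrow> i \<noteq> j \<Longrightarrow> S $$ (i,j) = 0"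
    "\<And>i. i < n \<Longrightarrow> 0 \<le> S $$ (i,i)"
    "Z = U * S * transpose_mat V"
  using svd Z unfolding is_svd_def Let_def by auto

lemma tr_bound:
  fixes Z U S V W1 W2 :: "real mat"
  assumes Z: "Z \<in> carrier_mat n n" and svd: "is_svd Z U S V"
    and W1: "W1 \<in> carrier_mat n n" and WW1: "transpose_mat W1 * W1 = 1\<^sub>m n"
    and W2: "W2 \<in> carrier_mat n n" and WW2: "transpose_mat W2 * W2 = 1\<^sub>m n"
    and p: "p \<le> n"
  shows "tr (subcols W1 p * transpose_mat (subcols W2 p) * Z) \<le> (\<Sum>i<n. S $$ (i,i))"
proof -
  note sv = svd_parts[OF Z svd]
  have U: "U \<in> carrier_mat n n" and S: "S \<in> carrier_mat n n" and V: "V \<in> carrier_mat n n" using sv by auto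
  have VT: "transpose_mat V \<in> carrier_mat n n" using V by simp
  define F where "F = transpose_mat (subcols W1 p)"
  define H where "H = transpose_mat (subcols W2 p)"
  have F: "F \<in> carrier_mat p n" unfolding F_def using subcols_carrier[OF W1] by simp
  have H: "H \<in> carrier_mat p n" unfolding H_def using subcols_carrier[OF W2] by simp
  have FT: "transpose_mat F \<in> carrier_mat n p" using F by simp
  have sF: "subcols W1 p = transpose_mat F" unfolding F_def by simp
  define A where "A = F * V"
  define B where "B = H * U"
  have A: "A \<in> carrier_mat p n" unfolding A_def using F V by simp
  have B: "B \<in> carrier_mat p n" unfolding B_def using H U by simp
  define T where "T = transpose_mat A * B"
  have T: "T \<in> carrier_mat n n" unfolding T_def using A B by simp
  have "tr (subcols W1 p * transpose_mat (subcols W2 p) * Z) = tr ((transpose_mat F * H * U * S) * transpose_mat V)"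
    unfolding sF H_def[symmetric] using sv(8) FT H U S VT
    by (simp add: assoc_mult_mat[of _ n p _ n _ n] assoc_mult_mat[of _ n n _ n _ n] assoc_mult_mat[of _ p n _ n _ n])
  also have "\<dots> = tr (transpose_mat V * (transpose_mat F * H * U * S))"
    by (rule tr_mult_comm[of _ n n], insert FT H U S VT, auto)
  also have "transpose_mat V * (transpose_mat F * H * U * S) = T * S"
  proof -
    have "transpose_mat A = transpose_mat V * transpose_mat F" unfolding A_def by (rule transpose_mult[OF F V])
    hence "T * S = transpose_mat V * transpose_mat F * (H * U) * S" unfolding T_def B_def by simp
    thus ?thesis using FT H U S VT
      by (simp add: assoc_mult_mat[of _ n p _ n _ n] assoc_mult_mat[of _ n n _ n _ n] assoc_mult_mat[of _ p n _ n _ n] assoc_mult_mat[of _ n n _ p _ n])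
  qed
  also have "tr (T * S) = (\<Sum>i<n. T $$ (i,i) * S $$ (i,i))"
  proof -
    have "tr (T * S) = (\<Sum>i<n. (T * S) $$ (i,i))" unfolding tr_def using T S by simp
    also have "\<dots> = (\<Sum>i<n. T $$ (i,i) * S $$ (i,i))"
    proof (rule sum.cong[OF refl])
      fix i assume i: "i \<in> {..<n}"
      have "(T * S) $$ (i,i) = (\<Sum>j<n. T $$ (i,j) * S $$ (j,i))" using mult_entry[OF T S] i by simp
      also have "\<dots> = (\<Sum>j\<in>{i}. T $$ (i,j) * S $$ (j,i))"
        by (rule sum.mono_neutral_right) (use i sv(6) in auto)
      finally show "(T * S) $$ (i,i) = T $$ (i,i) * S $$ (i,i)" by simp
    qed
    finally show ?thesis .
  qed
  also have "\<dots> \<le> (\<Sum>i<n. S $$ (i,i))"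
  proof (rule sum_mono)
    fix i assume i: "i \<in> {..<n}"
    have cA: "col A i = F *\<^sub>v col V i" unfolding A_def using F V i by (simp add: mult_mat_vec_def)
    have cB: "col B i = H *\<^sub>v col U i" unfolding B_def using H U i by (simp add: mult_mat_vec_def)
    have vi: "col V i \<bullet> col V i = 1" using col_sprod_orth[OF V sv(5)] i by simp
    have ui: "col U i \<bullet> col U i = 1" using col_sprod_orth[OF U sv(4)] i by simp
    have na: "col A i \<bullet> col A i \<le> 1" unfolding cA F_def
      using bessel_sub[OF W1 WW1 _ p, of "col V i"] vi V i by simp
    have nb: "col B i \<bullet> col B i \<le> 1" unfolding cB H_def
      using bessel_sub[OF W2 WW2 _ p, of "col U i"] ui U i by simp
    have "T $$ (i,i) = col A i \<bullet> col B i" unfolding T_def using A B i by simp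
    also have "\<dots> \<le> 1" using two_sprod_le[of "col A i" p "col B i"] na nb A B i by simp
    finally have "T $$ (i,i) \<le> 1" .
    thus "T $$ (i,i) * S $$ (i,i) \<le> S $$ (i,i)" using sv(7)[of i] i mult_right_mono[of "T $$ (i,i)" 1 "S $$ (i,i)"] by simp
  qed
  finally show ?thesis .
qed

lemma svd_tr_exact:
  fixes Z U S V :: "real mat"
  assumes Z: "Z \<in> carrier_mat n n" and svd: "is_svd Z U S V"
  shows "tr (V * transpose_mat U * Z) = (\<Sum>i<n. S $$ (i,i))"
proof -
  note sv = svd_parts[OF Z svd]
  have U: "U \<in> carrier_mat n n" and S: "S \<in> carrier_mat n n" and V: "V \<in> carrier_mat n n" using sv by auto
  have UT: "transpose_mat U \<in> carrier_mat n n" and VT: "transpose_mat V \<in> carrier_mat n n" using U V by auto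
  have "V * transpose_mat U * Z = V * (transpose_mat U * U) * S * transpose_mat V"
    unfolding sv(8) using U S V UT VT by (simp add: assoc_mult_mat[of _ n n _ n _ n])
  also have "\<dots> = (V * S) * transpose_mat V" using sv(4) V by simp
  finally have "tr (V * transpose_mat U * Z) = tr (transpose_mat V * (V * S))"
    using tr_mult_comm[of "V * S" n n "transpose_mat V"] V S VT by simp
  also have "transpose_mat V * (V * S) = S" using sv(5) V S VT by (simp add: assoc_mult_mat[of _ n n _ n _ n, symmetric])
  finally show ?thesis unfolding tr_def using S by simp
qed

lemma nuclear_norm_eq:
  fixes Z U S V :: "real mat"
  assumes Z: "Z \<in> carrier_mat n n" and svd: "is_svd Z U S V"
  shows "nuclear_norm Z = (\<Sum>i<n. S $$ (i,i))"
proof -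
  have uniq: "\<And>U2 S2 V2. is_svd Z U2 S2 V2 \<Longrightarrow> (\<Sum>i<n. S2 $$ (i,i)) = (\<Sum>i<n. S $$ (i,i))"
  proof -
    fix U2 S2 V2 assume svd2: "is_svd Z U2 S2 V2"
    note s1 = svd_parts[OF Z svd] and s2 = svd_parts[OF Z svd2]
    have "(\<Sum>i<n. S2 $$ (i,i)) = tr (V2 * transpose_mat U2 * Z)" using svd_tr_exact[OF Z svd2] by simp
    also have "\<dots> \<le> (\<Sum>i<n. S $$ (i,i))"
      using tr_bound[OF Z svd s2(3) s2(5) s2(1) s2(4) le_refl] subcols_full[OF s2(1)] subcols_full[OF s2(3)] by simp
    finally have le1: "(\<Sum>i<n. S2 $$ (i,i)) \<le> (\<Sum>i<n. S $$ (i,i))" .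
    have "(\<Sum>i<n. S $$ (i,i)) = tr (V * transpose_mat U * Z)" using svd_tr_exact[OF Z svd] by simp
    also have "\<dots> \<le> (\<Sum>i<n. S2 $$ (i,i))"
      using tr_bound[OF Z svd2 s1(3) s1(5) s1(1) s1(4) le_refl] subcols_full[OF s1(1)] subcols_full[OF s1(3)] by simp
    finally show "(\<Sum>i<n. S2 $$ (i,i)) = (\<Sum>i<n. S $$ (i,i))" using le1 by simp
  qed
  have mn: "min (dim_row Z) (dim_col Z) = n" using Z by simp
  show ?thesis unfolding nuclear_norm_def mn
  proof (rule the_equality)
    show "\<exists>U S' V. is_svd Z U S' V \<and> (\<Sum>i<n. S $$ (i,i)) = (\<Sum>i<n. S' $$ (i,i))" using svd by blast
  next
    fix s assume "\<exists>U S' V. is_svd Z U S' V \<and> s = (\<Sum>i<n. S' $$ (i,i))"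
    thus "s = (\<Sum>i<n. S $$ (i,i))" using uniq by blast
  qed
qed

lemma nuclear_norm_ge_tr:
  fixes Z W :: "real mat"
  assumes Z: "Z \<in> carrier_mat n n" and W: "W \<in> carrier_mat n n" and WW: "transpose_mat W * W = 1\<^sub>m n"
    and p: "p \<le> n"
  shows "tr (subcols W p * transpose_mat (subcols W p) * Z) \<le> nuclear_norm Z"
proof -
  obtain U S V where svd: "is_svd Z U S V" using svd_exists_sq[OF Z] by blast
  show ?thesis using tr_bound[OF Z svd W WW W WW p] nuclear_norm_eq[OF Z svd] by simp
qed

definition fro2 :: "real mat \<Rightarrow> real" where
  "fro2 M = (\<Sum>i<dim_row M. \<Sum>j<dim_col M. (M $$ (i,j))^2)"

lemma frob_sq: "(frob_norm M)^2 = fro2 M"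
  unfolding frob_norm_def fro2_def by (simp add: sum_nonneg)

lemma fro2_nonneg: "fro2 M \<ge> 0" unfolding fro2_def by (simp add: sum_nonneg)

lemma fro2_tr:
  fixes M :: "real mat"
  assumes M: "M \<in> carrier_mat p q"
  shows "fro2 M = tr (transpose_mat M * M)"
proof -
  have MT: "transpose_mat M \<in> carrier_mat q p" using M by simp
  have "tr (transpose_mat M * M) = (\<Sum>j<q. (transpose_mat M * M) $$ (j,j))" unfolding tr_def using M by simp
  also have "\<dots> = (\<Sum>j<q. \<Sum>i<p. (M $$ (i,j))^2)"
    by (rule sum.cong[OF refl], subst mult_entry[OF MT M], insert M, auto simp: power2_eq_square)
  also have "\<dots> = fro2 M" unfolding fro2_def using M by (simp add: sum.swap[of _ "{..<q}"])
  finally show ?thesis by simp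
qed

lemma fro2_transpose: "fro2 (transpose_mat M) = fro2 M"
  unfolding fro2_def by (simp add: sum.swap[of _ "{..<dim_col M}"])

lemma fro2_left_orth:
  fixes W M :: "real mat"
  assumes W: "W \<in> carrier_mat p q" and WW: "transpose_mat W * W = 1\<^sub>m q" and M: "M \<in> carrier_mat q r"
  shows "fro2 (W * M) = fro2 M"
proof -
  have WM: "W * M \<in> carrier_mat p r" using W M by simp
  have MT: "transpose_mat M \<in> carrier_mat r q" and WT: "transpose_mat W \<in> carrier_mat q p" using M W by auto
  have "transpose_mat (W * M) * (W * M) = transpose_mat M * (transpose_mat W * W) * M"
    using transpose_mult[OF W M] MT WT W M by (simp add: assoc_mult_mat[of _ r q _ q _ r] assoc_mult_mat[of _ q p _ q _ r] assoc_mult_mat[of _ r q _ p _ r])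
  also have "\<dots> = transpose_mat M * M" using WW MT by simp
  finally show ?thesis using fro2_tr[OF WM] fro2_tr[OF M] by simp
qed

lemma fro2_right_orth:
  fixes W M :: "real mat"
  assumes W: "W \<in> carrier_mat q q" and WW: "transpose_mat W * W = 1\<^sub>m q" and M: "M \<in> carrier_mat p q"
  shows "fro2 (M * transpose_mat W) = fro2 M"
proof -
  have "fro2 (M * transpose_mat W) = fro2 (transpose_mat (M * transpose_mat W))" by (simp add: fro2_transpose)
  also have "transpose_mat (M * transpose_mat W) = W * transpose_mat M"
    using transpose_mult[of M p q "transpose_mat W" q] M W by simp
  also have "fro2 (W * transpose_mat M) = fro2 (transpose_mat M)" by (rule fro2_left_orth[OF W WW], insert M, auto)
  finally show ?thesis by (simp add: fro2_transpose)
qed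

lemma tr_add:
  fixes A B :: "real mat"
  assumes "A \<in> carrier_mat n n" "B \<in> carrier_mat n n"
  shows "tr (A + B) = tr A + tr B"
  using assms unfolding tr_def by (simp add: sum.distrib)

lemma fro2_proj:
  fixes Q E :: "real mat"
  assumes Q: "Q \<in> carrier_mat m m" and sQ: "transpose_mat Q = Q" and QQ: "Q * Q = Q"
    and E: "E \<in> carrier_mat m p"
  shows "fro2 E = fro2 (Q * E) + fro2 ((1\<^sub>m m - Q) * E)"
proof -
  define R where "R = 1\<^sub>m m - Q"
  have R: "R \<in> carrier_mat m m" unfolding R_def using Q by (simp add: minus_carrier_mat)
  have RQ: "R * Q = 0\<^sub>m m m" unfolding R_def using Q QQ by (simp add: minus_mult_distrib_mat[of _ m m])
  have RR: "R * R = R"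
  proof -
    have "R * R = R * (1\<^sub>m m - Q)" unfolding R_def ..
    also have "\<dots> = R * 1\<^sub>m m - R * Q" by (rule mult_minus_distrib_mat[OF R], insert Q, auto)
    also have "\<dots> = R" unfolding RQ using R by (intro eq_matI) auto
    finally show ?thesis .
  qed
  have sR: "transpose_mat R = R" unfolding R_def by (subst transpose_minus[of _ m m], insert Q sQ, auto)
  have ET: "transpose_mat E \<in> carrier_mat p m" using E by simp
  have key: "\<And>P :: real mat. P \<in> carrier_mat m m \<Longrightarrow> transpose_mat P = P \<Longrightarrow> P * P = P \<Longrightarrow>
      fro2 (P * E) = tr (transpose_mat E * (P * E))"
  proof -
    fix P :: "real mat" assume P: "P \<in> carrier_mat m m" and sP: "transpose_mat P = P" and PP: "P * P = P"
    have "fro2 (P * E) = tr (transpose_mat (P * E) * (P * E))" using fro2_tr[of "P * E" m p] P E by simp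
    also have "transpose_mat (P * E) * (P * E) = transpose_mat E * (P * P * E)"
      using transpose_mult[OF P E] sP P E ET by (simp add: assoc_mult_mat[of _ p m _ m _ p] assoc_mult_mat[of _ m m _ m _ p])
    finally show "fro2 (P * E) = tr (transpose_mat E * (P * E))" using PP by simp
  qed
  have "R * E = E - Q * E" unfolding R_def using Q E by (simp add: minus_mult_distrib_mat[of _ m m])
  hence "transpose_mat E * (R * E) = transpose_mat E * E - transpose_mat E * (Q * E)"
    using ET E Q by (simp add: mult_minus_distrib_mat[of _ p m])
  hence "tr (transpose_mat E * (R * E)) = tr (transpose_mat E * E) - tr (transpose_mat E * (Q * E))"
    using tr_minus[of "transpose_mat E * E" p "transpose_mat E * (Q * E)"] ET E Q by simp
  thus ?thesis using key[OF Q sQ QQ] key[OF R sR RR] fro2_tr[OF E] unfolding R_def by simp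
qed

lemma diag_left_entry:
  fixes D M :: "real mat"
  assumes D: "D \<in> carrier_mat n n" and dD: "diagm n D" and M: "M \<in> carrier_mat n p" and i: "i < n" and b: "b < p"
  shows "(D * M) $$ (i,b) = D $$ (i,i) * M $$ (i,b)"
proof -
  have "(D * M) $$ (i,b) = (\<Sum>c<n. D $$ (i,c) * M $$ (c,b))" by (rule mult_entry[OF D M i b])
  also have "\<dots> = (\<Sum>c\<in>{i}. D $$ (i,c) * M $$ (c,b))"
    by (rule sum.mono_neutral_right) (use i dD in \<open>auto simp: diagm_def\<close>)
  finally show ?thesis by simp
qed

lemma col_subcols:
  fixes W :: "real mat"
  assumes "W \<in> carrier_mat n m" "j < p" "p \<le> m"
  shows "col (subcols W p) j = col W j"
  using assms by (intro eq_vecI) (auto simp: subcols_def)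

lemma A_analysis:
  fixes A :: "real mat"
  assumes A: "A \<in> carrier_mat m n"
  shows "\<exists>k VA Uk. k \<le> n \<and> VA \<in> carrier_mat n n \<and> transpose_mat VA * VA = 1\<^sub>m n \<and>
    Uk \<in> carrier_mat m k \<and> transpose_mat Uk * Uk = 1\<^sub>m k \<and> Uk * (transpose_mat Uk * A) = A \<and>
    (\<forall>Z. Z \<in> carrier_mat n n \<longrightarrow> A * Z = A \<longrightarrow> transpose_mat (subcols VA k) * Z = transpose_mat (subcols VA k))"
proof -
  have AT: "transpose_mat A \<in> carrier_mat n m" using A by simp
  define G where "G = transpose_mat A * A"
  have G: "G \<in> carrier_mat n n" unfolding G_def using A by simp
  have symG: "transpose_mat G = G" unfolding G_def using transpose_mult[OF AT A] by simp
  obtain V D where V: "V \<in> carrier_mat n n" and D: "D \<in> carrier_mat n n"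
    and VV: "transpose_mat V * V = 1\<^sub>m n" and dD: "diagm n D" and sD: "sortd n D"
    and Geq: "G = V * D * transpose_mat V"
    using spectral[OF G symG] by blast
  have VV': "V * transpose_mat V = 1\<^sub>m n" using orth_right[OF V VV] .
  have VT: "transpose_mat V \<in> carrier_mat n n" using V by simp
  have VTT: "transpose_mat V * transpose_mat (transpose_mat V) = 1\<^sub>m n" using VV by simp
  define Y where "Y = A * V"
  have Y: "Y \<in> carrier_mat m n" unfolding Y_def using A V by simp
  have YTA: "transpose_mat Y * A = transpose_mat V * G"
    unfolding Y_def G_def using transpose_mult[OF A V] A V AT VT
    by (simp add: assoc_mult_mat[of _ n n _ m _ n] assoc_mult_mat[of _ n m _ m _ n])
  have VTG: "transpose_mat V * G = D * transpose_mat V"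
  proof -
    have "transpose_mat V * G = (transpose_mat V * V) * D * transpose_mat V"
      unfolding Geq using V D VT by (simp add: assoc_mult_mat[of _ n n _ n _ n])
    thus ?thesis using VV D by simp
  qed
  have YY: "transpose_mat Y * Y = D"
  proof -
    have "transpose_mat Y * Y = (transpose_mat Y * A) * V"
      unfolding Y_def using transpose_mult[OF A V] A V AT VT
      by (simp add: assoc_mult_mat[of _ n n _ m _ n] assoc_mult_mat[of _ n m _ m _ n] assoc_mult_mat[of _ n m _ n _ n] assoc_mult_mat[of _ n n _ n _ n])
    also have "\<dots> = D * (transpose_mat V * V)" unfolding YTA VTG using D VT V by (simp add: assoc_mult_mat[of _ n n _ n _ n])
    finally show ?thesis using VV D by simp
  qed
  have Ycol: "\<And>i j. i < n \<Longrightarrow> j < n \<Longrightarrow> col Y i \<bullet> col Y j = D $$ (i,j)"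
  proof -
    fix i j assume i: "i < n" and j: "j < n"
    have "(transpose_mat Y * Y) $$ (i,j) = col Y i \<bullet> col Y j" using Y i j by simp
    thus "col Y i \<bullet> col Y j = D $$ (i,j)" using YY by simp
  qed
  have Dnn: "\<And>i. i < n \<Longrightarrow> D $$ (i,i) \<ge> 0"
    using Ycol sprod_self_nonneg_real by metis
  define k where "k = (LEAST i. i = n \<or> D $$ (i,i) \<le> 0)"
  have kn: "k \<le> n" unfolding k_def by (rule Least_le) simp
  have Dlt: "\<And>i. i < k \<Longrightarrow> D $$ (i,i) > 0"
    using not_less_Least[of _ "\<lambda>i. i = n \<or> D $$ (i,i) \<le> 0"] unfolding k_def[symmetric] by force
  have Dge: "\<And>i. k \<le> i \<Longrightarrow> i < n \<Longrightarrow> D $$ (i,i) = 0"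
  proof -
    fix i assume ki: "k \<le> i" and i: "i < n"
    have "k = n \<or> D $$ (k,k) \<le> 0" unfolding k_def by (rule LeastI[of _ n]) simp
    hence "D $$ (k,k) \<le> 0" using ki i by auto
    moreover have "D $$ (i,i) \<le> D $$ (k,k)" using sD ki i unfolding sortd_def by auto
    ultimately show "D $$ (i,i) = 0" using Dnn[OF i] by auto
  qed
  have Y0: "\<And>i a. k \<le> i \<Longrightarrow> i < n \<Longrightarrow> a < m \<Longrightarrow> Y $$ (a,i) = 0"
  proof -
    fix i a assume ki: "k \<le> i" and i: "i < n" and a: "a < m"
    have "col Y i \<bullet> col Y i = 0" using Ycol[OF i i] Dge[OF ki i] by simp
    hence "col Y i = 0\<^sub>v m" using conjugate_square_eq_0_vec[of "col Y i" m] col_dim[of Y i] Y by simp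
    hence "col Y i $ a = 0" using a by simp
    thus "Y $$ (a,i) = 0" using Y a i by simp
  qed
  define us where "us = map (\<lambda>i. (1 / sqrt (D $$ (i,i))) \<cdot>\<^sub>v col Y i) [0..<k]"
  define Uk where "Uk = mat_of_cols m us"
  have Uk: "Uk \<in> carrier_mat m k" unfolding Uk_def using mat_of_cols_carrier(1)[of m us] by (simp add: us_def)
  have colUk: "\<And>i. i < k \<Longrightarrow> col Uk i = (1 / sqrt (D $$ (i,i))) \<cdot>\<^sub>v col Y i"
  proof -
    fix i assume i: "i < k"
    have "us ! i = (1 / sqrt (D $$ (i,i))) \<cdot>\<^sub>v col Y i" unfolding us_def using i by simp
    moreover have "us ! i \<in> carrier_vec m" using calculation col_dim[of Y i] Y by simp
    ultimately show "col Uk i = (1 / sqrt (D $$ (i,i))) \<cdot>\<^sub>v col Y i"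
      unfolding Uk_def using col_mat_of_cols[of i us m] i by (simp add: us_def)
  qed
  have UkUk: "transpose_mat Uk * Uk = 1\<^sub>m k"
  proof (rule eq_matI)
    fix i j assume "i < dim_row (1\<^sub>m k)" "j < dim_col (1\<^sub>m k)"
    hence i: "i < k" and j: "j < k" by auto
    have "(transpose_mat Uk * Uk) $$ (i,j) = col Uk i \<bullet> col Uk j" using Uk i j by simp
    also have "\<dots> = (1 / sqrt (D $$ (i,i))) * (1 / sqrt (D $$ (j,j))) * (col Y i \<bullet> col Y j)"
      unfolding colUk[OF i] colUk[OF j] using col_dim[of Y i] col_dim[of Y j]
      by (simp add: scalar_prod_smult_distrib smult_scalar_prod_distrib)
    also have "\<dots> = 1\<^sub>m k $$ (i,j)"
    proof (cases "i = j")
      case True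
      have p: "D $$ (i,i) > 0" using Dlt[OF i] .
      have "sqrt (D $$ (i,i)) * sqrt (D $$ (i,i)) = D $$ (i,i)" using p by simp
      thus ?thesis using True i p Ycol[of i i] kn by (simp add: field_simps)
    next
      case False thus ?thesis using Ycol[of i j] dD i j kn unfolding diagm_def by simp
    qed
    finally show "(transpose_mat Uk * Uk) $$ (i,j) = 1\<^sub>m k $$ (i,j)" .
  qed (use Uk in auto)
  have UkT: "transpose_mat Uk \<in> carrier_mat k m" using Uk by simp
  have Ukent: "\<And>a i. a < m \<Longrightarrow> i < k \<Longrightarrow> Uk $$ (a,i) = (1 / sqrt (D $$ (i,i))) * Y $$ (a,i)"
  proof -
    fix a i assume a: "a < m" and i: "i < k"
    have "Uk $$ (a,i) = col Uk i $ a" using Uk a i by simp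
    thus "Uk $$ (a,i) = (1 / sqrt (D $$ (i,i))) * Y $$ (a,i)" using colUk[OF i] a Y i kn by simp
  qed
  have UkA: "\<And>i b. i < k \<Longrightarrow> b < n \<Longrightarrow> (transpose_mat Uk * A) $$ (i,b) = sqrt (D $$ (i,i)) * V $$ (b,i)"
  proof -
    fix i b assume i: "i < k" and b: "b < n"
    have "(transpose_mat Uk * A) $$ (i,b) = col Uk i \<bullet> col A b" using Uk A i b by simp
    also have "\<dots> = (1 / sqrt (D $$ (i,i))) * (col Y i \<bullet> col A b)"
      unfolding colUk[OF i] using col_dim[of Y i] col_dim[of A b] Y A by (simp add: smult_scalar_prod_distrib)
    also have "col Y i \<bullet> col A b = (transpose_mat Y * A) $$ (i,b)" using Y A i b kn by simp
    also have "\<dots> = (D * transpose_mat V) $$ (i,b)" unfolding YTA VTG ..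
    also have "\<dots> = D $$ (i,i) * transpose_mat V $$ (i,b)" by (rule diag_left_entry[OF D dD VT], insert i b kn, auto)
    also have "\<dots> = D $$ (i,i) * V $$ (b,i)" using V i b kn by simp
    finally show "(transpose_mat Uk * A) $$ (i,b) = sqrt (D $$ (i,i)) * V $$ (b,i)"
    proof -
      assume h: "(transpose_mat Uk * A) $$ (i,b) = 1 / sqrt (D $$ (i,i)) * (D $$ (i,i) * V $$ (b,i))"
      have p: "D $$ (i,i) > 0" using Dlt[OF i] .
      define s where "s = sqrt (D $$ (i,i))"
      have sp: "s > 0" unfolding s_def using p by simp
      have ds: "D $$ (i,i) = s * s" unfolding s_def using p by simp
      have "(transpose_mat Uk * A) $$ (i,b) = 1 / s * (D $$ (i,i) * V $$ (b,i))" using h unfolding s_def .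
      also have "\<dots> = 1 / s * (s * s * V $$ (b,i))" by (simp only: ds)
      also have "\<dots> = s * V $$ (b,i)" using sp by (simp add: field_simps)
      finally show ?thesis unfolding s_def .
    qed
  qed
  have QA: "Uk * (transpose_mat Uk * A) = A"
  proof (rule eq_matI)
    fix a b assume "a < dim_row A" "b < dim_col A"
    hence a: "a < m" and b: "b < n" using A by auto
    have "(Uk * (transpose_mat Uk * A)) $$ (a,b) = (\<Sum>i<k. Uk $$ (a,i) * (transpose_mat Uk * A) $$ (i,b))"
      by (rule mult_entry[OF Uk _ a b], insert UkT A, auto)
    also have "\<dots> = (\<Sum>i<k. Y $$ (a,i) * V $$ (b,i))"
    proof (rule sum.cong[OF refl])
      fix i assume i: "i \<in> {..<k}"
      have p: "D $$ (i,i) > 0" using Dlt i by simp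
      have "sqrt (D $$ (i,i)) > 0" using p by simp
      thus "Uk $$ (a,i) * (transpose_mat Uk * A) $$ (i,b) = Y $$ (a,i) * V $$ (b,i)"
        using Ukent[OF a] UkA[OF _ b] i by (simp add: field_simps)
    qed
    also have "\<dots> = (\<Sum>i<n. Y $$ (a,i) * V $$ (b,i))"
      by (rule sum.mono_neutral_left) (use kn Y0 a in auto)
    also have "\<dots> = (Y * transpose_mat V) $$ (a,b)"
      using mult_entry[OF Y VT a b] V b by simp
    also have "Y * transpose_mat V = A"
      unfolding Y_def using A V VT VV' by (simp add: assoc_mult_mat[of _ m n _ n _ n])
    finally show "(Uk * (transpose_mat Uk * A)) $$ (a,b) = A $$ (a,b)" .
  qed (use A Uk in auto)
  have Zpart: "\<forall>Z. Z \<in> carrier_mat n n \<longrightarrow> A * Z = A \<longrightarrow> transpose_mat (subcols V k) * Z = transpose_mat (subcols V k)"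
  proof (intro allI impI)
    fix Z assume Z: "Z \<in> carrier_mat n n" and AZ: "A * Z = A"
    have GZ: "G * Z = G" unfolding G_def using AT A Z AZ by (simp add: assoc_mult_mat[of _ n m _ n _ n])
    have DZ: "D * (transpose_mat V * Z) = D * transpose_mat V"
    proof -
      have "D * (transpose_mat V * Z) = (transpose_mat V * G) * Z"
        unfolding VTG using D VT Z by (simp add: assoc_mult_mat[of _ n n _ n _ n])
      also have "\<dots> = transpose_mat V * G" using VT G Z GZ by (simp add: assoc_mult_mat[of _ n n _ n _ n])
      finally show ?thesis unfolding VTG .
    qed
    have Vk: "subcols V k \<in> carrier_mat n k" using subcols_carrier[OF V] .
    show "transpose_mat (subcols V k) * Z = transpose_mat (subcols V k)"
    proof (rule eq_matI)
      fix i b assume "i < dim_row (transpose_mat (subcols V k))" "b < dim_col (transpose_mat (subcols V k))"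
      hence i: "i < k" and b: "b < n" using Vk by auto
      have e1: "(transpose_mat (subcols V k) * Z) $$ (i,b) = (transpose_mat V * Z) $$ (i,b)"
        using Vk V Z i b kn col_subcols[OF V i kn] by simp
      have "D $$ (i,i) * (transpose_mat V * Z) $$ (i,b) = D $$ (i,i) * transpose_mat V $$ (i,b)"
        using diag_left_entry[OF D dD _ _ b, of "transpose_mat V * Z" i] diag_left_entry[OF D dD VT _ b, of i]
          DZ VT Z i kn by auto
      hence "(transpose_mat V * Z) $$ (i,b) = transpose_mat V $$ (i,b)" using Dlt[OF i] by simp
      thus "(transpose_mat (subcols V k) * Z) $$ (i,b) = transpose_mat (subcols V k) $$ (i,b)"
        unfolding e1 using V Vk i b kn by (simp add: subcols_def)
    qed (use Vk Z in auto)
  qed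
  show ?thesis using kn V VV Uk UkUk QA Zpart by blast
qed

lemma rearr:
  fixes c g :: "nat \<Rightarrow> real"
  assumes dec: "\<And>i j. i \<le> j \<Longrightarrow> j < N \<Longrightarrow> c j \<le> c i"
    and cnn: "\<And>j. j < N \<Longrightarrow> 0 \<le> c j"
    and g0: "\<And>j. j < N \<Longrightarrow> 0 \<le> g j" and g1: "\<And>j. j < N \<Longrightarrow> g j \<le> 1"
    and gs: "(\<Sum>j<N. g j) \<le> real k"
  shows "(\<Sum>j<N. c j * g j) \<le> (\<Sum>j<min k N. c j)"
proof (cases "N \<le> k")
  case True
  have "(\<Sum>j<N. c j * g j) \<le> (\<Sum>j<N. c j)"
    by (rule sum_mono) (use cnn g1 in \<open>auto intro: mult_left_le\<close>)
  thus ?thesis using True by (simp add: min_def)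
next
  case False
  hence kN: "k < N" by simp
  have split: "\<And>f :: nat \<Rightarrow> real. (\<Sum>j<N. f j) = (\<Sum>j<k. f j) + (\<Sum>j\<in>{k..<N}. f j)"
  proof -
    fix f :: "nat \<Rightarrow> real"
    have "{..<N} = {..<k} \<union> {k..<N}" using kN by auto
    thus "(\<Sum>j<N. f j) = (\<Sum>j<k. f j) + (\<Sum>j\<in>{k..<N}. f j)" by (simp add: sum.union_disjoint ivl_disj_int)
  qed
  have a: "(\<Sum>j<k. c j * (g j - 1)) \<le> (\<Sum>j<k. c k * (g j - 1))"
  proof (rule sum_mono)
    fix j assume j: "j \<in> {..<k}"
    have "c k \<le> c j" using dec[of j k] j kN by simp
    moreover have "g j - 1 \<le> 0" using g1[of j] j kN by simp
    ultimately show "c j * (g j - 1) \<le> c k * (g j - 1)" by (simp add: mult_right_mono_neg)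
  qed
  have b: "(\<Sum>j\<in>{k..<N}. c j * g j) \<le> (\<Sum>j\<in>{k..<N}. c k * g j)"
  proof (rule sum_mono)
    fix j assume j: "j \<in> {k..<N}"
    have "c j \<le> c k" using dec[of k j] j by simp
    thus "c j * g j \<le> c k * g j" using g0[of j] j by (simp add: mult_right_mono)
  qed
  have "(\<Sum>j<N. c j * g j) - (\<Sum>j<k. c j) = (\<Sum>j<k. c j * (g j - 1)) + (\<Sum>j\<in>{k..<N}. c j * g j)"
    using split[of "\<lambda>j. c j * g j"] by (simp add: algebra_simps sum_subtractf)
  also have "\<dots> \<le> (\<Sum>j<k. c k * (g j - 1)) + (\<Sum>j\<in>{k..<N}. c k * g j)" using a b by simp
  also have "\<dots> = c k * ((\<Sum>j<N. g j) - real k)"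
    using split[of g] by (simp add: algebra_simps sum_subtractf sum_distrib_left)
  also have "\<dots> \<le> 0" using cnn[OF kN] gs by (simp add: mult_nonneg_nonpos)
  finally show ?thesis using kN by simp
qed

lemma tail_split:
  fixes c :: "nat \<Rightarrow> real"
  shows "(\<Sum>i\<in>{k..<N}. c i) = (\<Sum>i<N. c i) - (\<Sum>i<min k N. c i)"
proof (cases "k \<le> N")
  case True
  have "{..<N} = {..<k} \<union> {k..<N}" using True by auto
  hence "(\<Sum>i<N. c i) = (\<Sum>i<k. c i) + (\<Sum>i\<in>{k..<N}. c i)" by (simp add: sum.union_disjoint ivl_disj_int)
  thus ?thesis using True by simp
next
  case False thus ?thesis by simp
qed

lemma svd_parts_rect:
  assumes X: "X \<in> carrier_mat m n" and svd: "is_svd X U S V"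
  shows "U \<in> carrier_mat m m" "S \<in> carrier_mat m n" "V \<in> carrier_mat n n"
    "transpose_mat U * U = 1\<^sub>m m" "transpose_mat V * V = 1\<^sub>m n"
    "\<And>i j. i < m \<Longrightarrow> j < n \<Longrightarrow> i \<noteq> j \<Longrightarrow> S $$ (i,j) = 0"
    "\<And>i. i < min m n \<Longrightarrow> 0 \<le> S $$ (i,i)"
    "\<And>i j. i \<le> j \<Longrightarrow> j < min m n \<Longrightarrow> S $$ (j,j) \<le> S $$ (i,i)"
    "X = U * S * transpose_mat V"
  using svd X unfolding is_svd_def Let_def by auto

lemma fro_bound:
  fixes X U S V A E Uk :: "real mat"
  assumes X: "X \<in> carrier_mat m n" and svd: "is_svd X U S V"
    and A: "A \<in> carrier_mat m n" and E: "E \<in> carrier_mat m n" and XAE: "X = A + E"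
    and Uk: "Uk \<in> carrier_mat m k" and UkUk: "transpose_mat Uk * Uk = 1\<^sub>m k"
    and QA: "Uk * (transpose_mat Uk * A) = A"
  shows "(\<Sum>i\<in>{k..<min m n}. (S $$ (i,i))^2) \<le> fro2 E"
proof -
  note sv = svd_parts_rect[OF X svd]
  have U: "U \<in> carrier_mat m m" and S: "S \<in> carrier_mat m n" and V: "V \<in> carrier_mat n n" using sv by auto
  have UT: "transpose_mat U \<in> carrier_mat m m" and VT: "transpose_mat V \<in> carrier_mat n n" using U V by auto
  have UkT: "transpose_mat Uk \<in> carrier_mat k m" using Uk by simp
  define N where "N = min m n"
  obtain Uf where Uf: "Uf \<in> carrier_mat m m" and UfUf: "transpose_mat Uf * Uf = 1\<^sub>m m"
    and cUf: "\<forall>i<k. col Uf i = col Uk i" and km: "k \<le> m"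
    using orth_completion[OF Uk UkUk] by blast
  have Uksub: "subcols Uf k = Uk"
  proof (rule eq_matI)
    fix a j assume "a < dim_row Uk" "j < dim_col Uk"
    hence a: "a < m" and j: "j < k" using Uk by auto
    have "Uk $$ (a,j) = col Uk j $ a" using Uk a j by simp
    also have "\<dots> = col Uf j $ a" using cUf j by simp
    also have "\<dots> = Uf $$ (a,j)" using Uf a j km by simp
    finally show "subcols Uf k $$ (a,j) = Uk $$ (a,j)" using Uf a j by (simp add: subcols_def)
  qed (use Uf Uk in \<open>auto simp: subcols_def\<close>)
  define Q where "Q = Uk * transpose_mat Uk"
  have Q: "Q \<in> carrier_mat m m" unfolding Q_def using Uk by simp
  have QQ: "Q * Q = Q"
  proof -
    have "Q * Q = Uk * (transpose_mat Uk * (Uk * transpose_mat Uk))"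
      unfolding Q_def using Uk UkT by (simp add: assoc_mult_mat[of _ m k _ m _ m])
    also have "transpose_mat Uk * (Uk * transpose_mat Uk) = (transpose_mat Uk * Uk) * transpose_mat Uk"
      using Uk UkT by (simp add: assoc_mult_mat[of _ k m _ k _ m])
    finally show ?thesis using UkUk Uk unfolding Q_def by simp
  qed
  have symQ: "transpose_mat Q = Q" unfolding Q_def using transpose_mult[OF Uk UkT] by simp
  have QA': "Q * A = A" unfolding Q_def using QA Uk UkT A by (simp add: assoc_mult_mat[of _ m k _ m _ n])
  define R where "R = 1\<^sub>m m - Q"
  have R: "R \<in> carrier_mat m m" unfolding R_def using Q by (simp add: minus_carrier_mat)
  have EXA: "E = X - A" using XAE X A E by (intro eq_matI) auto
  have RA: "R * A = 0\<^sub>m m n" unfolding R_def using Q A QA' by (simp add: minus_mult_distrib_mat[of _ m m])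
  have RE: "R * E = R * X"
  proof -
    have "R * E = R * X - R * A" unfolding EXA by (rule mult_minus_distrib_mat[OF R], insert X A, auto)
    thus ?thesis unfolding RA using R X by (intro eq_matI) auto
  qed
  have h1: "fro2 (R * X) \<le> fro2 E"
    using fro2_proj[OF Q symQ QQ E] fro2_nonneg[of "Q * E"] RE unfolding R_def by simp
  have h2: "fro2 X = fro2 (Q * X) + fro2 (R * X)" using fro2_proj[OF Q symQ QQ X] unfolding R_def .
  define B where "B = transpose_mat Uk * U"
  have B: "B \<in> carrier_mat k m" unfolding B_def using Uk U by simp
  have h3: "fro2 (Q * X) = fro2 (B * S)"
  proof -
    have "Q * X = Uk * (transpose_mat Uk * X)" unfolding Q_def using Uk UkT X by (simp add: assoc_mult_mat[of _ m k _ m _ n])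
    hence "fro2 (Q * X) = fro2 (transpose_mat Uk * X)" using fro2_left_orth[OF Uk UkUk, of "transpose_mat Uk * X" n] UkT X by simp
    also have "transpose_mat Uk * X = (B * S) * transpose_mat V"
      unfolding sv(9) B_def using UkT U S VT by (simp add: assoc_mult_mat[of _ k m _ m _ n] assoc_mult_mat[of _ k m _ n _ n] assoc_mult_mat[of _ m m _ n _ n])
    also have "fro2 \<dots> = fro2 (B * S)" by (rule fro2_right_orth[OF V sv(5)], insert B S, auto)
    finally show ?thesis .
  qed
  define g where "g = (\<lambda>j. \<Sum>a<k. (B $$ (a,j))^2)"
  define c where "c = (\<lambda>j. (S $$ (j,j))^2)"
  have BS: "\<And>a j. a < k \<Longrightarrow> j < n \<Longrightarrow> (B * S) $$ (a,j) = (if j < m then B $$ (a,j) * S $$ (j,j) else 0)"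
  proof -
    fix a j assume a: "a < k" and j: "j < n"
    have "(B * S) $$ (a,j) = (\<Sum>i<m. B $$ (a,i) * S $$ (i,j))" by (rule mult_entry[OF B S a j])
    also have "\<dots> = (\<Sum>i\<in>(if j < m then {j} else {}). B $$ (a,i) * S $$ (i,j))"
      by (rule sum.mono_neutral_right) (use j sv(6) in auto)
    finally show "(B * S) $$ (a,j) = (if j < m then B $$ (a,j) * S $$ (j,j) else 0)" by (cases "j < m") auto
  qed
  have h4: "fro2 (B * S) = (\<Sum>j<N. c j * g j)"
  proof -
    have "fro2 (B * S) = (\<Sum>a<k. \<Sum>j<n. ((B * S) $$ (a,j))^2)" unfolding fro2_def using B S by simp
    also have "\<dots> = (\<Sum>a<k. \<Sum>j<N. c j * (B $$ (a,j))^2)"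
    proof (rule sum.cong[OF refl])
      fix a assume a: "a \<in> {..<k}"
      have "(\<Sum>j<n. ((B * S) $$ (a,j))^2) = (\<Sum>j<n. if j < m then c j * (B $$ (a,j))^2 else 0)"
        by (rule sum.cong[OF refl]) (use a BS in \<open>auto simp: c_def power_mult_distrib\<close>)
      also have "\<dots> = (\<Sum>j<N. c j * (B $$ (a,j))^2)"
        unfolding N_def by (rule sum.mono_neutral_cong_right) auto
      finally show "(\<Sum>j<n. ((B * S) $$ (a,j))^2) = (\<Sum>j<N. c j * (B $$ (a,j))^2)" .
    qed
    also have "\<dots> = (\<Sum>j<N. \<Sum>a<k. c j * (B $$ (a,j))^2)" by (rule sum.swap)
    also have "\<dots> = (\<Sum>j<N. c j * g j)" unfolding g_def by (simp add: sum_distrib_left)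
    finally show ?thesis .
  qed
  have h5: "fro2 X = (\<Sum>j<N. c j)"
  proof -
    have "fro2 X = fro2 (U * (S * transpose_mat V))" unfolding sv(9) using U S VT by (simp add: assoc_mult_mat[of _ m m _ n _ n])
    also have "\<dots> = fro2 (S * transpose_mat V)" by (rule fro2_left_orth[OF U sv(4)], insert S VT, auto)
    also have "\<dots> = fro2 S" by (rule fro2_right_orth[OF V sv(5) S])
    also have "\<dots> = (\<Sum>i<m. \<Sum>j<n. (S $$ (i,j))^2)" unfolding fro2_def using S by simp
    also have "\<dots> = (\<Sum>i<m. if i < n then c i else 0)"
    proof (rule sum.cong[OF refl])
      fix i assume i: "i \<in> {..<m}"
      have "(\<Sum>j<n. (S $$ (i,j))^2) = (\<Sum>j\<in>(if i < n then {i} else {}). (S $$ (i,j))^2)"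
        by (rule sum.mono_neutral_right) (use i sv(6) in auto)
      thus "(\<Sum>j<n. (S $$ (i,j))^2) = (if i < n then c i else 0)" by (cases "i < n") (auto simp: c_def)
    qed
    also have "\<dots> = (\<Sum>j<N. c j)" unfolding N_def by (rule sum.mono_neutral_cong_right) auto
    finally show ?thesis .
  qed
  have g0: "\<And>j. 0 \<le> g j" unfolding g_def by (simp add: sum_nonneg)
  have gcol: "\<And>j. j < m \<Longrightarrow> g j = col B j \<bullet> col B j"
    unfolding g_def using B by (simp add: scalar_prod_def lessThan_atLeast0 power2_eq_square)
  have g1: "\<And>j. j < m \<Longrightarrow> g j \<le> 1"
  proof -
    fix j assume j: "j < m"
    have cB: "col B j = transpose_mat (subcols Uf k) *\<^sub>v col U j"
      unfolding B_def Uksub using UkT U j by (simp add: mult_mat_vec_def)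
    have "col U j \<bullet> col U j = 1" using col_sprod_orth[OF U sv(4) j j] by simp
    thus "g j \<le> 1" using gcol[OF j] cB bessel_sub[OF Uf UfUf _ km, of "col U j"] U j by simp
  qed
  have gsum: "(\<Sum>j<m. g j) = real k"
  proof -
    have "(\<Sum>j<m. g j) = fro2 B" unfolding g_def fro2_def using B by (simp add: sum.swap[of _ "{..<m}"])
    also have "\<dots> = fro2 (transpose_mat B)" by (simp add: fro2_transpose)
    also have "transpose_mat B = transpose_mat U * Uk" unfolding B_def using transpose_mult[OF UkT U] by simp
    also have "fro2 (transpose_mat U * Uk) = fro2 Uk"
      by (rule fro2_left_orth[OF UT _ Uk], insert orth_right[OF U sv(4)], simp)
    also have "\<dots> = tr (transpose_mat Uk * Uk)" by (rule fro2_tr[OF Uk])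
    finally show ?thesis using UkUk by simp
  qed
  have gsN: "(\<Sum>j<N. g j) \<le> real k"
  proof -
    have "(\<Sum>j<N. g j) \<le> (\<Sum>j<m. g j)" by (rule sum_mono2) (use g0 in \<open>auto simp: N_def\<close>)
    thus ?thesis using gsum by simp
  qed
  have re: "(\<Sum>j<N. c j * g j) \<le> (\<Sum>j<min k N. c j)"
  proof (rule rearr)
    show "\<And>i j. i \<le> j \<Longrightarrow> j < N \<Longrightarrow> c j \<le> c i"
      unfolding c_def N_def using sv(7) sv(8) by (metis le_less_trans power_mono)
    show "\<And>j. j < N \<Longrightarrow> 0 \<le> c j" unfolding c_def by simp
    show "\<And>j. j < N \<Longrightarrow> 0 \<le> g j" using g0 by simp
    show "\<And>j. j < N \<Longrightarrow> g j \<le> 1" using g1 unfolding N_def by simp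
    show "(\<Sum>j<N. g j) \<le> real k" by (rule gsN)
  qed
  have "(\<Sum>i\<in>{k..<N}. c i) = (\<Sum>i<N. c i) - (\<Sum>i<min k N. c i)" by (rule tail_split)
  also have "\<dots> \<le> fro2 X - fro2 (Q * X)" using h5 h3 h4 re by simp
  also have "\<dots> = fro2 (R * X)" using h2 by simp
  also have "\<dots> \<le> fro2 E" by (rule h1)
  finally show ?thesis unfolding c_def N_def .
qed

lemma cols_subcols:
  fixes W :: "real mat"
  assumes W: "W \<in> carrier_mat n p" and r: "r \<le> p"
  shows "mat_of_cols n (map (col W) [0..<r]) = subcols W r"
  using W r by (intro eq_matI) (auto simp: subcols_def mat_of_cols_def)

lemma subcols_orth:
  fixes W :: "real mat"
  assumes W: "W \<in> carrier_mat n n" and WW: "transpose_mat W * W = 1\<^sub>m n" and r: "r \<le> n"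
  shows "transpose_mat (subcols W r) * subcols W r = 1\<^sub>m r"
proof (rule eq_matI)
  have Wr: "subcols W r \<in> carrier_mat n r" using subcols_carrier[OF W] .
  fix i j assume "i < dim_row (1\<^sub>m r)" "j < dim_col (1\<^sub>m r)"
  hence i: "i < r" and j: "j < r" by auto
  have "(transpose_mat (subcols W r) * subcols W r) $$ (i,j) = col (subcols W r) i \<bullet> col (subcols W r) j"
    using Wr i j by simp
  also have "\<dots> = col W i \<bullet> col W j" using col_subcols[OF W i r] col_subcols[OF W j r] by simp
  also have "\<dots> = 1\<^sub>m r $$ (i,j)" using col_sprod_orth[OF W WW, of i j] i j r by simp
  finally show "(transpose_mat (subcols W r) * subcols W r) $$ (i,j) = 1\<^sub>m r $$ (i,j)" .
qed (use subcols_carrier[OF W] in auto)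

lemma proj_entry:
  fixes W :: "real mat"
  assumes W: "W \<in> carrier_mat n n" and r: "r \<le> n" and a: "a < n" and b: "b < n"
  shows "(subcols W r * transpose_mat (subcols W r)) $$ (a,b) = (\<Sum>c<r. W $$ (a,c) * W $$ (b,c))"
proof -
  have Wr: "subcols W r \<in> carrier_mat n r" using subcols_carrier[OF W] .
  show ?thesis using mult_entry[OF Wr _ a b, of "transpose_mat (subcols W r)"] Wr W a b r
    by (simp add: subcols_def)
qed

theorem corollary2:
  fixes X U S V :: "real mat" and m n r :: nat and lam :: real
  assumes X: "X \<in> carrier_mat m n"
    and lam: "lam > 0"
    and svd: "is_svd X U S V"
    and r_opt: "\<forall>k::nat. real r + lam * (\<Sum>i\<in>{r..<min m n}. (S $$ (i, i))\<^sup>2)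
                  \<le> real k + lam * (\<Sum>i\<in>{k..<min m n}. (S $$ (i, i))\<^sup>2)"
  defines "U1 \<equiv> mat_of_cols m (map (col U) [0..<r])"
    and "V1 \<equiv> mat_of_cols n (map (col V) [0..<r])"
    and "\<Sigma>1 \<equiv> mat r r (\<lambda>(i, j). if i = j then S $$ (i, i) else 0)"
  defines "Astar \<equiv> U1 * \<Sigma>1 * transpose_mat V1"
    and "Zstar \<equiv> V1 * transpose_mat V1"
  defines "Estar \<equiv> X - Astar"
  shows "Astar \<in> carrier_mat m n \<and> Zstar \<in> carrier_mat n n \<and> Estar \<in> carrier_mat m n \<and>
         Astar = Astar * Zstar \<and> X = Astar + Estar \<and>
         (\<forall>A Z E. A \<in> carrier_mat m n \<longrightarrow> Z \<in> carrier_mat n n \<longrightarrow> E \<in> carrier_mat m n \<longrightarrow>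
            A = A * Z \<longrightarrow> X = A + E \<longrightarrow>
            nuclear_norm Zstar + lam * (frob_norm Estar)\<^sup>2
              \<le> nuclear_norm Z + lam * (frob_norm E)\<^sup>2)"
proof -
  note sv = svd_parts_rect[OF X svd]
  have U: "U \<in> carrier_mat m m" and S: "S \<in> carrier_mat m n" and V: "V \<in> carrier_mat n n" using sv by auto
  have UT: "transpose_mat U \<in> carrier_mat m m" and VT: "transpose_mat V \<in> carrier_mat n n" using U V by auto
  define N where "N = min m n"
  define tail where "tail = (\<lambda>k. (\<Sum>i\<in>{k..<N}. (S $$ (i, i))\<^sup>2))"
  have tail0: "\<And>k. tail k \<ge> 0" unfolding tail_def by (simp add: sum_nonneg)
  have ropt: "\<And>k. real r + lam * tail r \<le> real k + lam * tail k" using r_opt unfolding tail_def N_def by blast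
  have rN: "r \<le> N"
  proof -
    have "real r + lam * tail r \<le> real N + lam * tail N" by (rule ropt)
    moreover have "tail N = 0" unfolding tail_def by simp
    moreover have "lam * tail r \<ge> 0" using lam tail0[of r] by simp
    ultimately show ?thesis by simp
  qed
  have rm: "r \<le> m" and rn: "r \<le> n" using rN unfolding N_def by auto
  have U1s: "U1 = subcols U r" unfolding U1_def by (rule cols_subcols[OF U rm])
  have V1s: "V1 = subcols V r" unfolding V1_def by (rule cols_subcols[OF V rn])
  have U1: "U1 \<in> carrier_mat m r" unfolding U1s by (rule subcols_carrier[OF U])
  have V1: "V1 \<in> carrier_mat n r" unfolding V1s by (rule subcols_carrier[OF V])
  have V1T: "transpose_mat V1 \<in> carrier_mat r n" using V1 by simp
  have Sg: "\<Sigma>1 \<in> carrier_mat r r" unfolding \<Sigma>1_def by simp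
  have As: "Astar \<in> carrier_mat m n" unfolding Astar_def using U1 Sg V1T by simp
  have Zs: "Zstar \<in> carrier_mat n n" unfolding Zstar_def using V1 V1T by simp
  have Es: "Estar \<in> carrier_mat m n" unfolding Estar_def using As X by (simp add: minus_carrier_mat)
  have V1V1: "transpose_mat V1 * V1 = 1\<^sub>m r" unfolding V1s by (rule subcols_orth[OF V sv(5) rn])
  have AZ: "Astar = Astar * Zstar"
  proof -
    have "Astar * Zstar = U1 * \<Sigma>1 * (transpose_mat V1 * V1) * transpose_mat V1"
      unfolding Astar_def Zstar_def using U1 Sg V1 V1T
      by (simp add: assoc_mult_mat[of _ m r _ r _ n] assoc_mult_mat[of _ r r _ r _ n] assoc_mult_mat[of _ r n _ r _ n]
          assoc_mult_mat[of _ m r _ r _ r] assoc_mult_mat[of _ r r _ r _ r] assoc_mult_mat[of _ m r _ n _ n]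
          assoc_mult_mat[of _ r r _ n _ n] assoc_mult_mat[of _ r n _ n _ n])
    thus ?thesis using V1V1 U1 Sg V1T unfolding Astar_def by simp
  qed
  have XAE: "X = Astar + Estar" unfolding Estar_def using X As by (intro eq_matI) auto
  define S' where "S' = mat n n (\<lambda>(i,j). if i = j \<and> i < r then 1 else (0::real))"
  have S': "S' \<in> carrier_mat n n" unfolding S'_def by simp
  have Zeq: "Zstar = V * S' * transpose_mat V"
  proof (rule eq_matI)
    fix a b assume "a < dim_row (V * S' * transpose_mat V)" "b < dim_col (V * S' * transpose_mat V)"
    hence a: "a < n" and b: "b < n" using V by auto
    have VS': "\<And>c. c < n \<Longrightarrow> (V * S') $$ (a,c) = (if c < r then V $$ (a,c) else 0)"
    proof -
      fix c assume c: "c < n"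
      have "(V * S') $$ (a,c) = (\<Sum>d<n. V $$ (a,d) * S' $$ (d,c))" by (rule mult_entry[OF V S' a c])
      also have "\<dots> = (\<Sum>d\<in>{c}. V $$ (a,d) * S' $$ (d,c))"
        by (rule sum.mono_neutral_right) (use c in \<open>auto simp: S'_def\<close>)
      finally show "(V * S') $$ (a,c) = (if c < r then V $$ (a,c) else 0)" using c by (simp add: S'_def)
    qed
    have "(V * S' * transpose_mat V) $$ (a,b) = (\<Sum>c<n. (V * S') $$ (a,c) * transpose_mat V $$ (c,b))"
      by (rule mult_entry[of _ n n _ n], insert V S' a b, auto)
    also have "\<dots> = (\<Sum>c<n. if c < r then V $$ (a,c) * V $$ (b,c) else 0)"
      by (rule sum.cong[OF refl]) (use VS' V b in auto)
    also have "\<dots> = (\<Sum>c<r. V $$ (a,c) * V $$ (b,c))"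
      by (rule sum.mono_neutral_cong_right) (use rn in auto)
    also have "\<dots> = Zstar $$ (a,b)" unfolding Zstar_def V1s using proj_entry[OF V rn a b] by simp
    finally show "Zstar $$ (a,b) = (V * S' * transpose_mat V) $$ (a,b)" by simp
  qed (use Zs V in auto)
  have svdZ: "is_svd Zstar V S' V"
    unfolding is_svd_def Let_def
  proof (intro conjI)
    show "\<forall>i<dim_row Zstar. \<forall>j<dim_col Zstar. i \<noteq> j \<longrightarrow> S' $$ (i, j) = 0" using Zs by (simp add: S'_def)
    show "\<forall>i<min (dim_row Zstar) (dim_col Zstar). 0 \<le> S' $$ (i, i)" using Zs by (simp add: S'_def)
    show "\<forall>i j. i \<le> j \<and> j < min (dim_row Zstar) (dim_col Zstar) \<longrightarrow> S' $$ (j, j) \<le> S' $$ (i, i)"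
      using Zs by (simp add: S'_def)
  qed (use Zs V S' sv(5) Zeq in auto)
  have nucZs: "nuclear_norm Zstar = real r"
  proof -
    have "nuclear_norm Zstar = (\<Sum>i<n. S' $$ (i,i))" by (rule nuclear_norm_eq[OF Zs svdZ])
    also have "\<dots> = (\<Sum>i<n. if i < r then 1 else 0)" by (rule sum.cong[OF refl]) (simp add: S'_def)
    also have "\<dots> = (\<Sum>i<r. 1)" by (rule sum.mono_neutral_cong_right) (use rn in auto)
    finally show ?thesis by simp
  qed
  define Sr where "Sr = mat m n (\<lambda>(i,j). if i = j \<and> i < r then S $$ (i,i) else 0)"
  have Sr: "Sr \<in> carrier_mat m n" unfolding Sr_def by simp
  have Aeq: "Astar = U * Sr * transpose_mat V"
  proof (rule eq_matI)
    fix a b assume "a < dim_row (U * Sr * transpose_mat V)" "b < dim_col (U * Sr * transpose_mat V)"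
    hence a: "a < m" and b: "b < n" using U V by auto
    have USr: "\<And>c. c < n \<Longrightarrow> (U * Sr) $$ (a,c) = (if c < r then U $$ (a,c) * S $$ (c,c) else 0)"
    proof -
      fix c assume c: "c < n"
      have "(U * Sr) $$ (a,c) = (\<Sum>d<m. U $$ (a,d) * Sr $$ (d,c))" by (rule mult_entry[OF U Sr a c])
      also have "\<dots> = (\<Sum>d\<in>(if c < r then {c} else {}). U $$ (a,d) * Sr $$ (d,c))"
        by (rule sum.mono_neutral_right) (use c rm in \<open>auto simp: Sr_def\<close>)
      finally show "(U * Sr) $$ (a,c) = (if c < r then U $$ (a,c) * S $$ (c,c) else 0)"
        using c rm by (cases "c < r") (auto simp: Sr_def)
    qed
    have U1S: "\<And>c. c < r \<Longrightarrow> (U1 * \<Sigma>1) $$ (a,c) = U $$ (a,c) * S $$ (c,c)"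
    proof -
      fix c assume c: "c < r"
      have "(U1 * \<Sigma>1) $$ (a,c) = (\<Sum>d<r. U1 $$ (a,d) * \<Sigma>1 $$ (d,c))" by (rule mult_entry[OF U1 Sg a c])
      also have "\<dots> = (\<Sum>d\<in>{c}. U1 $$ (a,d) * \<Sigma>1 $$ (d,c))"
        by (rule sum.mono_neutral_right) (use c in \<open>auto simp: \<Sigma>1_def\<close>)
      finally show "(U1 * \<Sigma>1) $$ (a,c) = U $$ (a,c) * S $$ (c,c)" using c a U by (simp add: \<Sigma>1_def U1s subcols_def)
    qed
    have "(U * Sr * transpose_mat V) $$ (a,b) = (\<Sum>c<n. (U * Sr) $$ (a,c) * transpose_mat V $$ (c,b))"
      by (rule mult_entry[of _ m n _ n], insert U Sr V a b, auto)
    also have "\<dots> = (\<Sum>c<n. if c < r then U $$ (a,c) * S $$ (c,c) * V $$ (b,c) else 0)"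
      by (rule sum.cong[OF refl]) (use USr V b in auto)
    also have "\<dots> = (\<Sum>c<r. U $$ (a,c) * S $$ (c,c) * V $$ (b,c))"
      by (rule sum.mono_neutral_cong_right) (use rn in auto)
    also have "\<dots> = (\<Sum>c<r. (U1 * \<Sigma>1) $$ (a,c) * transpose_mat V1 $$ (c,b))"
      by (rule sum.cong[OF refl]) (use U1S V1s b V rn in \<open>auto simp: subcols_def\<close>)
    also have "\<dots> = Astar $$ (a,b)" unfolding Astar_def
      by (rule mult_entry[of _ m r _ n, symmetric], insert U1 Sg V1T a b, auto)
    finally show "Astar $$ (a,b) = (U * Sr * transpose_mat V) $$ (a,b)" by simp
  qed (use As U V in auto)
  have Eeq: "Estar = U * (S - Sr) * transpose_mat V"
  proof -
    have "U * (S - Sr) = U * S - U * Sr" by (rule mult_minus_distrib_mat[OF U S Sr])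
    hence "U * (S - Sr) * transpose_mat V = U * S * transpose_mat V - U * Sr * transpose_mat V"
      using minus_mult_distrib_mat[of "U * S" m n "U * Sr" "transpose_mat V" n] U S Sr VT by simp
    thus ?thesis unfolding Estar_def Aeq sv(9)[symmetric] by simp
  qed
  have froE: "fro2 Estar = tail r"
  proof -
    have SSr: "S - Sr \<in> carrier_mat m n" using Sr by (simp add: minus_carrier_mat)
    have "fro2 Estar = fro2 (U * ((S - Sr) * transpose_mat V))"
      unfolding Eeq using U SSr VT by (simp add: assoc_mult_mat[of _ m m _ n _ n])
    also have "\<dots> = fro2 ((S - Sr) * transpose_mat V)" by (rule fro2_left_orth[OF U sv(4), of _ n], insert SSr VT, auto)
    also have "\<dots> = fro2 (S - Sr)" by (rule fro2_right_orth[OF V sv(5) SSr])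
    also have "\<dots> = (\<Sum>i<m. \<Sum>j<n. ((S - Sr) $$ (i,j))^2)" unfolding fro2_def using SSr Sr S by simp
    also have "\<dots> = (\<Sum>i<m. if i < n \<and> r \<le> i then (S $$ (i,i))^2 else 0)"
    proof (rule sum.cong[OF refl])
      fix i assume i: "i \<in> {..<m}"
      have "(\<Sum>j<n. ((S - Sr) $$ (i,j))^2) = (\<Sum>j\<in>(if i < n then {i} else {}). ((S - Sr) $$ (i,j))^2)"
        by (rule sum.mono_neutral_right) (use i sv(6) S Sr in \<open>auto simp: Sr_def\<close>)
      thus "(\<Sum>j<n. ((S - Sr) $$ (i,j))^2) = (if i < n \<and> r \<le> i then (S $$ (i,i))^2 else 0)"
        using i S Sr by (cases "i < n") (auto simp: Sr_def)
    qed
    also have "\<dots> = (\<Sum>i\<in>{r..<N}. (S $$ (i,i))^2)"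
      unfolding N_def by (rule sum.mono_neutral_cong_right) auto
    finally show ?thesis unfolding tail_def .
  qed
  have main: "\<forall>A Z E. A \<in> carrier_mat m n \<longrightarrow> Z \<in> carrier_mat n n \<longrightarrow> E \<in> carrier_mat m n \<longrightarrow>
            A = A * Z \<longrightarrow> X = A + E \<longrightarrow>
            nuclear_norm Zstar + lam * (frob_norm Estar)\<^sup>2
              \<le> nuclear_norm Z + lam * (frob_norm E)\<^sup>2"
  proof (intro allI impI)
    fix A Z E assume A: "A \<in> carrier_mat m n" and Z: "Z \<in> carrier_mat n n" and E: "E \<in> carrier_mat m n"
      and AZ: "A = A * Z" and XAE': "X = A + E"
    obtain k VA Uk where kn: "k \<le> n" and VA: "VA \<in> carrier_mat n n" and VAVA: "transpose_mat VA * VA = 1\<^sub>m n"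
      and Uk: "Uk \<in> carrier_mat m k" and UkUk: "transpose_mat Uk * Uk = 1\<^sub>m k"
      and QA: "Uk * (transpose_mat Uk * A) = A"
      and Zp: "\<forall>Z. Z \<in> carrier_mat n n \<longrightarrow> A * Z = A \<longrightarrow> transpose_mat (subcols VA k) * Z = transpose_mat (subcols VA k)"
      using A_analysis[OF A] by blast
    define Vk where "Vk = subcols VA k"
    have Vk: "Vk \<in> carrier_mat n k" unfolding Vk_def by (rule subcols_carrier[OF VA])
    have VkT: "transpose_mat Vk \<in> carrier_mat k n" using Vk by simp
    have VkZ: "transpose_mat Vk * Z = transpose_mat Vk" using Zp Z AZ unfolding Vk_def by auto
    have "tr (Vk * transpose_mat Vk * Z) = tr (Vk * transpose_mat Vk)"
      using VkZ Vk VkT Z by (simp add: assoc_mult_mat[of _ n k _ n _ n])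
    also have "\<dots> = tr (transpose_mat Vk * Vk)" by (rule tr_mult_comm[OF Vk VkT])
    also have "\<dots> = real k" unfolding Vk_def subcols_orth[OF VA VAVA kn] by simp
    finally have "real k \<le> nuclear_norm Z" using nuclear_norm_ge_tr[OF Z VA VAVA kn] unfolding Vk_def by simp
    moreover have "tail k \<le> fro2 E" unfolding tail_def N_def by (rule fro_bound[OF X svd A E XAE' Uk UkUk QA])
    ultimately have "real k + lam * tail k \<le> nuclear_norm Z + lam * fro2 E"
      using lam by (simp add: add_mono mult_left_mono)
    moreover have "nuclear_norm Zstar + lam * (frob_norm Estar)\<^sup>2 = real r + lam * tail r"
      using nucZs froE by (simp add: frob_sq)
    ultimately show "nuclear_norm Zstar + lam * (frob_norm Estar)\<^sup>2 \<le> nuclear_norm Z + lam * (frob_norm E)\<^sup>2"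
      using ropt[of k] by (simp add: frob_sq)
  qed
  show ?thesis using As Zs Es AZ XAE main by blast
qed

end
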